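(* Let $G$ be a $(P_3+P_1)$-free graph on $n$ vertices and let $\ell \ge \chi(G)+1$ be an integer. Then $\mathcal{R}_\ell(G)$ is connected and has diameter at most $6n$.
   Context: All graphs are finite and simple. A $k$-colouring of $G$ is a map $\alpha: V(G)\to\{1,\dots,k\}$ with $\alpha(u)\neq\alpha(v)$ for every edge $uv$; $\chi(G)$ is the chromatic number. The reconfiguration graph $\mathcal{R}_k(G)$ has the $k$-colourings of $G$ as vertices, two being adjacent if they differ on exactly one vertex. $G$ is $H$-free if it has no induced subgraph isomorphic to $H$; $P_3+P_1$ is the disjoint union of a path on 3 vertices and a single vertex. *)

theory Defs
  imports Main
begin

definition simple_graph :: "'a set \<Rightarrow> ('a \<Rightarrow> 'a \<Rightarrow> bool) \<Rightarrow> bool" where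
  "simple_graph V E \<longleftrightarrow> finite V \<and> (\<forall>u v. E u v \<longrightarrow> u \<in> V \<and> v \<in> V)
     \<and> (\<forall>u v. E u v \<longrightarrow> E v u) \<and> (\<forall>v. \<not> E v v)"

(* k-colourings: maps V \<rightarrow> {1..k}, proper, and (to make them unique objects)
   equal to undefined outside V *)
definition colouring :: "'a set \<Rightarrow> ('a \<Rightarrow> 'a \<Rightarrow> bool) \<Rightarrow> nat \<Rightarrow> ('a \<Rightarrow> nat) \<Rightarrow> bool" where
  "colouring V E k \<alpha> \<longleftrightarrow> (\<forall>v\<in>V. \<alpha> v \<in> {1..k}) \<and> (\<forall>v. v \<notin> V \<longrightarrow> \<alpha> v = undefined)
     \<and> (\<forall>u v. E u v \<longrightarrow> \<alpha> u \<noteq> \<alpha> v)"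

definition chromatic_number :: "'a set \<Rightarrow> ('a \<Rightarrow> 'a \<Rightarrow> bool) \<Rightarrow> nat" where
  "chromatic_number V E = (LEAST k. \<exists>\<alpha>. colouring V E k \<alpha>)"

definition recol_adj :: "'a set \<Rightarrow> ('a \<Rightarrow> 'a \<Rightarrow> bool) \<Rightarrow> nat \<Rightarrow> ('a \<Rightarrow> nat) \<Rightarrow> ('a \<Rightarrow> nat) \<Rightarrow> bool" where
  "recol_adj V E k \<alpha> \<beta> \<longleftrightarrow> colouring V E k \<alpha> \<and> colouring V E k \<beta>
     \<and> card {v\<in>V. \<alpha> v \<noteq> \<beta> v} = 1"

definition recol_walk :: "'a set \<Rightarrow> ('a \<Rightarrow> 'a \<Rightarrow> bool) \<Rightarrow> nat \<Rightarrow> nat \<Rightarrow> ('a \<Rightarrow> nat) \<Rightarrow> ('a \<Rightarrow> nat) \<Rightarrow> bool" where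
  "recol_walk V E k m \<alpha> \<beta> \<longleftrightarrow> (\<exists>p :: nat \<Rightarrow> ('a \<Rightarrow> nat).
      p 0 = \<alpha> \<and> p m = \<beta> \<and> (\<forall>i\<in>{0..m}. colouring V E k (p i))
      \<and> (\<forall>i<m. recol_adj V E k (p i) (p (Suc i))))"

definition recol_dist_le :: "'a set \<Rightarrow> ('a \<Rightarrow> 'a \<Rightarrow> bool) \<Rightarrow> nat \<Rightarrow> ('a \<Rightarrow> nat) \<Rightarrow> ('a \<Rightarrow> nat) \<Rightarrow> nat \<Rightarrow> bool" where
  "recol_dist_le V E k \<alpha> \<beta> d \<longleftrightarrow> (\<exists>m\<le>d. recol_walk V E k m \<alpha> \<beta>)"

(* P_3 + P_1 on vertex set {0,1,2,3}: path 0-1-2 and isolated vertex 3 *)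
definition P3P1_edge :: "nat \<Rightarrow> nat \<Rightarrow> bool" where
  "P3P1_edge i j \<longleftrightarrow> {i, j} = {0, 1} \<or> {i, j} = {1, 2}"

definition has_induced_P3P1 :: "'a set \<Rightarrow> ('a \<Rightarrow> 'a \<Rightarrow> bool) \<Rightarrow> bool" where
  "has_induced_P3P1 V E \<longleftrightarrow> (\<exists>f :: nat \<Rightarrow> 'a. inj_on f {0..3} \<and> f ` {0..3} \<subseteq> V
      \<and> (\<forall>i\<in>{0..3}. \<forall>j\<in>{0..3}. E (f i) (f j) \<longleftrightarrow> P3P1_edge i j))"

definition P3P1_free :: "'a set \<Rightarrow> ('a \<Rightarrow> 'a \<Rightarrow> bool) \<Rightarrow> bool" where
  "P3P1_free V E \<longleftrightarrow> \<not> has_induced_P3P1 V E"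

end

theory Submission
  imports Defs
begin


definition pcol :: "('a \<Rightarrow> 'a \<Rightarrow> bool) \<Rightarrow> 'a set \<Rightarrow> nat set \<Rightarrow> ('a \<Rightarrow> nat) \<Rightarrow> bool" where
  "pcol E S W \<phi> \<longleftrightarrow> (\<forall>v\<in>S. \<phi> v \<in> W) \<and> (\<forall>u\<in>S. \<forall>v\<in>S. E u v \<longrightarrow> \<phi> u \<noteq> \<phi> v)"

definition eqon :: "'a set \<Rightarrow> ('a \<Rightarrow> nat) \<Rightarrow> ('a \<Rightarrow> nat) \<Rightarrow> bool" where
  "eqon S \<phi> \<psi> \<longleftrightarrow> (\<forall>x\<in>S. \<phi> x = \<psi> x)"

definition mv :: "('a \<Rightarrow> 'a \<Rightarrow> bool) \<Rightarrow> 'a set \<Rightarrow> nat set \<Rightarrow> ('a \<Rightarrow> nat) \<Rightarrow> ('a \<Rightarrow> nat) \<Rightarrow> bool" where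
  "mv E S W \<phi> \<psi> \<longleftrightarrow> (\<exists>v\<in>S. \<exists>c\<in>W. c \<noteq> \<phi> v \<and> (\<forall>u\<in>S. E v u \<longrightarrow> \<phi> u \<noteq> c)
      \<and> (\<forall>x\<in>S. \<psi> x = (if x = v then c else \<phi> x)))"

inductive R :: "('a \<Rightarrow> 'a \<Rightarrow> bool) \<Rightarrow> 'a set \<Rightarrow> nat set \<Rightarrow> nat \<Rightarrow> ('a \<Rightarrow> nat) \<Rightarrow> ('a \<Rightarrow> nat) \<Rightarrow> bool"
  for E S W where
  R_base: "eqon S \<phi> \<psi> \<Longrightarrow> R E S W k \<phi> \<psi>"
| R_step: "mv E S W \<phi> \<chi> \<Longrightarrow> R E S W k \<chi> \<psi> \<Longrightarrow> R E S W (Suc k) \<phi> \<psi>"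

definition merge :: "'a set \<Rightarrow> ('a \<Rightarrow> nat) \<Rightarrow> ('a \<Rightarrow> nat) \<Rightarrow> ('a \<Rightarrow> nat)" where
  "merge A \<psi> \<phi> = (\<lambda>x. if x \<in> A then \<psi> x else \<phi> x)"

lemma eqon_refl[simp]: "eqon S \<phi> \<phi>" by (simp add: eqon_def)
lemma eqon_sym: "eqon S \<phi> \<psi> \<Longrightarrow> eqon S \<psi> \<phi>" by (simp add: eqon_def)
lemma eqon_trans: "eqon S \<phi> \<psi> \<Longrightarrow> eqon S \<psi> \<chi> \<Longrightarrow> eqon S \<phi> \<chi>" by (simp add: eqon_def)
lemma eqon_subset: "eqon S \<phi> \<psi> \<Longrightarrow> A \<subseteq> S \<Longrightarrow> eqon A \<phi> \<psi>" by (auto simp add: eqon_def)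

lemma mv_cong: "eqon S \<phi> \<phi>' \<Longrightarrow> mv E S W \<phi> \<chi> \<Longrightarrow> mv E S W \<phi>' \<chi>"
  unfolding mv_def eqon_def by metis

lemma mv_cong2: "eqon S \<chi> \<chi>' \<Longrightarrow> mv E S W \<phi> \<chi> \<Longrightarrow> mv E S W \<phi> \<chi>'"
  unfolding mv_def eqon_def by metis

lemma R_cong: "R E S W k \<phi> \<psi> \<Longrightarrow> eqon S \<phi> \<phi>' \<Longrightarrow> R E S W k \<phi>' \<psi>"
proof (induction rule: R.cases)
  case (R_base \<phi> \<psi> k)
  then show ?case by (meson R.R_base eqon_sym eqon_trans)
next
  case (R_step \<phi> \<chi> k \<psi>)
  then show ?case by (meson R.R_step mv_cong)
qed

lemma R_cong2: "R E S W k \<phi> \<psi> \<Longrightarrow> eqon S \<psi> \<psi>' \<Longrightarrow> R E S W k \<phi> \<psi>'"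
proof (induction rule: R.induct)
  case (R_base \<phi> \<psi> k)
  then show ?case by (meson R.R_base eqon_trans)
next
  case (R_step \<phi> \<chi> k \<psi>)
  then show ?case by (meson R.R_step)
qed

lemma R_mono: "R E S W k \<phi> \<psi> \<Longrightarrow> k \<le> k' \<Longrightarrow> R E S W k' \<phi> \<psi>"
proof (induction arbitrary: k' rule: R.induct)
  case (R_base \<phi> \<psi> k)
  then show ?case by (simp add: R.R_base)
next
  case (R_step \<phi> \<chi> k \<psi>)
  then obtain j where "k' = Suc j" "k \<le> j" by (cases k') auto
  then show ?case using R_step by (meson R.R_step)
qed

lemma R_trans: "R E S W k1 \<phi> \<psi> \<Longrightarrow> R E S W k2 \<psi> \<chi> \<Longrightarrow> R E S W (k1 + k2) \<phi> \<chi>"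
proof (induction rule: R.induct)
  case (R_base \<phi> \<psi> k)
  then have "R E S W k2 \<phi> \<chi>" using R_cong eqon_sym by blast
  then show ?case using R_mono by fastforce
next
  case (R_step \<phi> \<chi>' k \<psi>)
  then show ?case by (simp add: R.R_step)
qed

lemma R_one: "mv E S W \<phi> \<psi> \<Longrightarrow> R E S W 1 \<phi> \<psi>"
  using R.R_step[of E S W \<phi> \<psi> 0 \<psi>] R.R_base[of S \<psi> \<psi>] by simp

lemma R_refl: "R E S W k \<phi> \<phi>"
  by (simp add: R.R_base)

lemma mv_palette: "mv E S W \<phi> \<psi> \<Longrightarrow> W \<subseteq> W' \<Longrightarrow> mv E S W' \<phi> \<psi>"
  unfolding mv_def by blast

lemma R_palette: "R E S W k \<phi> \<psi> \<Longrightarrow> W \<subseteq> W' \<Longrightarrow> R E S W' k \<phi> \<psi>"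
  by (induction rule: R.induct) (auto intro: R.intros mv_palette)

lemma pcol_cong: "pcol E S W \<phi> \<Longrightarrow> eqon S \<phi> \<psi> \<Longrightarrow> pcol E S W \<psi>"
  unfolding pcol_def eqon_def by metis

lemma pcol_subset: "pcol E S W \<phi> \<Longrightarrow> A \<subseteq> S \<Longrightarrow> W \<subseteq> W' \<Longrightarrow> pcol E A W' \<phi>"
  unfolding pcol_def by blast

lemma mv_pcol:
  assumes "mv E S W \<phi> \<psi>" "pcol E S W \<phi>" "\<forall>u v. E u v \<longrightarrow> E v u"
  shows "pcol E S W \<psi>"
proof -
  obtain v c where v: "v \<in> S" "c \<in> W" "c \<noteq> \<phi> v" "\<forall>u\<in>S. E v u \<longrightarrow> \<phi> u \<noteq> c"
    "\<forall>x\<in>S. \<psi> x = (if x = v then c else \<phi> x)"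
    using assms(1) unfolding mv_def by blast
  show ?thesis unfolding pcol_def
  proof (intro conjI ballI impI)
    fix x assume "x \<in> S" then show "\<psi> x \<in> W" using v assms(2) unfolding pcol_def by auto
  next
    fix x y assume xy: "x \<in> S" "y \<in> S" "E x y"
    show "\<psi> x \<noteq> \<psi> y"
    proof (cases "x = v")
      case True
      then have "y \<noteq> v" using xy assms(2) unfolding pcol_def by blast
      then show ?thesis using True v xy by auto
    next
      case False
      show ?thesis
      proof (cases "y = v")
        case True
        then have "E v x" using xy assms(3) by blast
        then show ?thesis using True False v xy by auto
      next
        case False2: False
        then show ?thesis using False v xy assms(2) unfolding pcol_def by auto
      qed
    qed
  qed
qed

lemma R_pcol:
  assumes "R E S W k \<phi> \<psi>" "pcol E S W \<phi>" "\<forall>u v. E u v \<longrightarrow> E v u"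
  shows "pcol E S W \<psi>"
  using assms by (induction rule: R.induct) (auto intro: pcol_cong mv_pcol)

lemma R_sym:
  assumes "R E S W k \<phi> \<psi>" "pcol E S W \<phi>" "\<forall>u v. E u v \<longrightarrow> E v u"
  shows "R E S W k \<psi> \<phi>"
  using assms
proof (induction rule: R.induct)
  case (R_base \<phi> \<psi> k)
  then show ?case by (simp add: R.R_base eqon_sym)
next
  case (R_step \<phi> \<chi> k \<psi>)
  have pc: "pcol E S W \<chi>" using R_step mv_pcol by blast
  have IH: "R E S W k \<psi> \<chi>" using R_step pc by blast
  obtain v c where v: "v \<in> S" "c \<in> W" "c \<noteq> \<phi> v" "\<forall>u\<in>S. E v u \<longrightarrow> \<phi> u \<noteq> c"
    "\<forall>x\<in>S. \<chi> x = (if x = v then c else \<phi> x)"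
    using R_step(1) unfolding mv_def by blast
  have "mv E S W \<chi> \<phi>"
    unfolding mv_def
  proof (intro bexI[of _ v] bexI[of _ "\<phi> v"] conjI ballI impI)
    show "\<phi> v \<noteq> \<chi> v" using v by auto
    show "\<phi> v \<in> W" using R_step(4) v unfolding pcol_def by auto
    show "v \<in> S" by fact
    fix u assume u: "u \<in> S" "E v u"
    then have "u \<noteq> v" using R_step(4) v unfolding pcol_def by blast
    then have "\<chi> u = \<phi> u" using u v by auto
    moreover have "\<phi> v \<noteq> \<phi> u" using R_step(4) u v unfolding pcol_def by blast
    ultimately show "\<chi> u \<noteq> \<phi> v" by simp
  next
    fix x assume "x \<in> S" then show "\<phi> x = (if x = v then \<phi> v else \<chi> x)" using v by auto
  qed
  then have "R E S W (k + 1) \<psi> \<phi>" using R_trans[OF IH R_one] by blast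
  then show ?case by simp
qed

lemma mv_lift:
  assumes "mv E A W \<phi> \<chi>" "A \<subseteq> S"
    "\<forall>w\<in>S - A. \<forall>v\<in>A. E v w \<longrightarrow> \<phi> w \<notin> W"
  shows "mv E S W \<phi> (merge A \<chi> \<phi>)"
  using assms unfolding mv_def merge_def by (smt (verit) DiffI subsetD)

lemma R_lift:
  assumes "R E A W k \<phi> \<psi>" "A \<subseteq> S"
    "\<forall>w\<in>S - A. \<forall>v\<in>A. E v w \<longrightarrow> \<phi> w \<notin> W"
  shows "R E S W k \<phi> (merge A \<psi> \<phi>)"
  using assms
proof (induction k arbitrary: \<phi>)
  case 0
  then show ?case
  proof (cases rule: R.cases)
    case R_base
    then show ?thesis by (intro R.R_base) (auto simp: eqon_def merge_def)
  qed
next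
  case (Suc k)
  from Suc.prems(1) show ?case
  proof (cases rule: R.cases)
    case R_base
    then show ?thesis by (intro R.R_base) (auto simp: eqon_def merge_def)
  next
    case (R_step \<chi>)
    have m: "mv E S W \<phi> (merge A \<chi> \<phi>)" using mv_lift R_step Suc.prems by blast
    have "R E A W k (merge A \<chi> \<phi>) \<psi>" using R_cong[OF R_step(2)] by (auto simp: eqon_def merge_def)
    then have "R E S W k (merge A \<chi> \<phi>) (merge A \<psi> (merge A \<chi> \<phi>))"
      using Suc.IH Suc.prems by (auto simp: merge_def)
    moreover have "merge A \<psi> (merge A \<chi> \<phi>) = merge A \<psi> \<phi>" by (auto simp: merge_def)
    ultimately show ?thesis using m R.R_step by metis
  qed
qed



definition samepart :: "'a set \<Rightarrow> ('a \<Rightarrow> nat) \<Rightarrow> ('a \<Rightarrow> nat) \<Rightarrow> bool" where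
  "samepart S \<phi> \<psi> \<longleftrightarrow> (\<forall>u\<in>S. \<forall>v\<in>S. (\<phi> u = \<phi> v) = (\<psi> u = \<psi> v))"

lemma samepart_card:
  assumes "samepart S \<phi> \<psi>"
  shows "card (\<phi> ` S) = card (\<psi> ` S)"
proof -
  let ?P = "(\<lambda>x. (\<phi> x, \<psi> x)) ` S"
  have i1: "inj_on fst ?P" using assms unfolding samepart_def inj_on_def by auto
  have i2: "inj_on snd ?P" using assms unfolding samepart_def inj_on_def by auto
  have "fst ` ?P = \<phi> ` S" by (auto simp: image_image)
  moreover have "snd ` ?P = \<psi> ` S" by (auto simp: image_image)
  ultimately show ?thesis using card_image[OF i1] card_image[OF i2] by simp
qed

lemma samepart_sym: "samepart S \<phi> \<psi> \<Longrightarrow> samepart S \<psi> \<phi>"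
  unfolding samepart_def by auto

lemma move_class:
  assumes "finite A" "A \<subseteq> S" "\<forall>a\<in>A. \<phi> a = oldc" "b \<in> W" "b \<notin> \<phi> ` S" "pcol E S W' \<phi>"
  shows "R E S W (card A) \<phi> (merge A (\<lambda>_. b) \<phi>)"
  using assms
proof (induction A rule: finite_induct)
  case empty
  then show ?case by (intro R.R_base) (auto simp: eqon_def merge_def)
next
  case (insert a A')
  have IH: "R E S W (card A') \<phi> (merge A' (\<lambda>_. b) \<phi>)" using insert by auto
  have aS: "a \<in> S" using insert by auto
  have "mv E S W (merge A' (\<lambda>_. b) \<phi>) (merge (insert a A') (\<lambda>_. b) \<phi>)"
    unfolding mv_def
  proof (intro bexI[of _ a] bexI[of _ b] conjI ballI impI)
    show "b \<noteq> merge A' (\<lambda>_. b) \<phi> a" using insert aS by (auto simp: merge_def)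
    fix u assume u: "u \<in> S" "E a u"
    show "merge A' (\<lambda>_. b) \<phi> u \<noteq> b"
    proof (cases "u \<in> A'")
      case True
      then have "\<phi> u = \<phi> a" using insert by auto
      then show ?thesis using u aS insert.prems(5) unfolding pcol_def by metis
    next
      case False
      then show ?thesis using u insert by (auto simp: merge_def)
    qed
  next
    fix x assume "x \<in> S"
    show "merge (insert a A') (\<lambda>_. b) \<phi> x = (if x = a then b else merge A' (\<lambda>_. b) \<phi> x)"
      by (auto simp: merge_def)
  qed (use insert aS in auto)
  then have "R E S W (card A' + 1) \<phi> (merge (insert a A') (\<lambda>_. b) \<phi>)"
    using R_trans[OF IH R_one] by blast
  then show ?case using insert by simp
qed

lemma class_move_props:
  assumes "A = {x\<in>S. \<phi> x = a}" "v \<in> S" "\<phi> v = a" "b \<notin> \<phi> ` S" "b \<in> W" "pcol E S W \<phi>"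
  shows "pcol E S W (merge A (\<lambda>_. b) \<phi>)" "a \<notin> (merge A (\<lambda>_. b) \<phi>) ` S"
proof -
  show "pcol E S W (merge A (\<lambda>_. b) \<phi>)"
    unfolding pcol_def
  proof (intro conjI ballI impI)
    fix x assume "x \<in> S" then show "merge A (\<lambda>_. b) \<phi> x \<in> W" using assms unfolding pcol_def merge_def by auto
  next
    fix x y assume xy: "x \<in> S" "y \<in> S" "E x y"
    then have "\<phi> x \<noteq> \<phi> y" using assms(6) unfolding pcol_def by auto
    then show "merge A (\<lambda>_. b) \<phi> x \<noteq> merge A (\<lambda>_. b) \<phi> y"
      using xy assms(1,4) unfolding merge_def by auto
  qed
  show "a \<notin> (merge A (\<lambda>_. b) \<phi>) ` S"
    using assms(1-4) unfolding merge_def by auto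
qed

lemma class_move_samepart:
  assumes "A = {x\<in>S. \<phi> x = a}" "v \<in> S" "\<phi> v = a" "b \<notin> \<phi> ` S" "samepart S \<phi> \<psi>"
  shows "samepart S (merge A (\<lambda>_. b) \<phi>) \<psi>"
  using assms unfolding samepart_def merge_def by auto

lemma rename_aux:
  assumes fin: "finite S" and symE: "\<forall>u v. E u v \<longrightarrow> E v u"
    and pc2: "pcol E S W \<psi>"
  shows "pcol E S W \<phi> \<Longrightarrow> samepart S \<phi> \<psi> \<Longrightarrow> (\<exists>s\<in>W. s \<notin> \<phi> ` S) \<Longrightarrow>
    n = 2 * card {v\<in>S. \<phi> v \<noteq> \<psi> v} - card {v\<in>S. \<phi> v \<notin> \<psi> ` S} \<Longrightarrow>
    R E S W n \<phi> \<psi>"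
proof (induction n arbitrary: \<phi> rule: less_induct)
  case (less n \<phi>)
  define M where "M = {v\<in>S. \<phi> v \<noteq> \<psi> v}"
  define Q where "Q = {v\<in>S. \<phi> v \<notin> \<psi> ` S}"
  have QM: "Q \<subseteq> M" unfolding Q_def M_def by auto
  have finM: "finite M" unfolding M_def using fin by auto
  have qm: "card Q \<le> card M" using QM finM card_mono by blast
  have n: "n = 2 * card M - card Q" using less.prems M_def Q_def by simp
  show ?case
  proof (cases "M = {}")
    case True
    then show ?thesis by (intro R.R_base) (auto simp: eqon_def M_def)
  next
    case False
    then obtain v0 where v0: "v0 \<in> S" "\<phi> v0 \<noteq> \<psi> v0" unfolding M_def by auto
    show ?thesis
    proof (cases "\<exists>v\<in>S. \<phi> v \<noteq> \<psi> v \<and> \<psi> v \<notin> \<phi> ` S")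
      case True
      then obtain v where v: "v \<in> S" "\<phi> v \<noteq> \<psi> v" "\<psi> v \<notin> \<phi> ` S" by blast
      define a where "a = \<phi> v"
      define b where "b = \<psi> v"
      define A where "A = {x\<in>S. \<phi> x = a}"
      have A2: "A = {x\<in>S. \<psi> x = b}" using less.prems(2) v unfolding A_def a_def b_def samepart_def by auto
      define \<phi>' where "\<phi>' = merge A (\<lambda>_. b) \<phi>"
      have bW: "b \<in> W" using pc2 v unfolding b_def pcol_def by auto
      have finA: "finite A" unfolding A_def using fin by auto
      have AS: "A \<subseteq> S" unfolding A_def by auto
      have vA: "v \<in> A" unfolding A_def a_def using v by auto
      have cA: "card A \<ge> 1" using finA vA by (metis One_nat_def Suc_leI card_gt_0_iff empty_iff)
      have AM: "A \<subseteq> M" unfolding M_def using A2 v unfolding A_def a_def b_def by (auto simp: image_iff)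
      have mv1: "R E S W (card A) \<phi> \<phi>'"
        unfolding \<phi>'_def by (rule move_class[where oldc=a, OF finA AS _ bW _ less.prems(1)]) (use A_def v b_def in auto)
      have pc': "pcol E S W \<phi>'" "a \<notin> \<phi>' ` S"
        using class_move_props[OF A_def v(1) a_def[symmetric] _ bW less.prems(1)] v unfolding \<phi>'_def b_def by auto
      have sp': "samepart S \<phi>' \<psi>"
        using class_move_samepart[OF A_def v(1) a_def[symmetric] _ less.prems(2)] v unfolding \<phi>'_def b_def by auto
      have aW: "a \<in> W" using less.prems(1) v unfolding pcol_def a_def by auto
      have M': "{x\<in>S. \<phi>' x \<noteq> \<psi> x} = M - A"
        unfolding M_def \<phi>'_def merge_def using A2 by auto
      have Q': "{x\<in>S. \<phi>' x \<notin> \<psi> ` S} = Q - A"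
        unfolding Q_def \<phi>'_def merge_def using A2 by auto
      have cM': "card (M - A) = card M - card A" using AM finA by (simp add: card_Diff_subset)
      have cQ': "card (Q - A) \<ge> card Q - card A" by (simp add: diff_card_le_card_Diff finA)
      have QA: "card (Q - A) \<le> card (M - A)" using QM finM by (intro card_mono) auto
      have AMc: "card A \<le> card M" using AM finM card_mono by blast
      define n' where "n' = 2 * card (M - A) - card (Q - A)"
      have lt: "n' + card A \<le> n" unfolding n'_def n using cM' cQ' QA AMc qm by linarith
      have "R E S W n' \<phi>' \<psi>"
        using less.IH[of n' \<phi>'] lt cA pc' sp' aW M' Q' n'_def by auto
      then have "R E S W (card A + n') \<phi> \<psi>" using R_trans[OF mv1] by blast
      then show ?thesis using R_mono lt by (metis add.commute)
    next
      case False
      have sub: "\<psi> ` S \<subseteq> \<phi> ` S" using False by (auto simp: image_iff) (metis)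
      have eqc: "card (\<psi> ` S) = card (\<phi> ` S)" using samepart_card less.prems(2) by metis
      have eqi: "\<psi> ` S = \<phi> ` S" using card_subset_eq[OF _ sub eqc] fin by auto
      obtain s where s: "s \<in> W" "s \<notin> \<phi> ` S" using less.prems(3) by blast
      have Q0: "Q = {}" unfolding Q_def using eqi by auto
      define a where "a = \<phi> v0"
      define A where "A = {x\<in>S. \<phi> x = a}"
      have A2: "A = {x\<in>S. \<psi> x = \<psi> v0}" using less.prems(2) v0 unfolding A_def a_def samepart_def by auto
      define \<phi>' where "\<phi>' = merge A (\<lambda>_. s) \<phi>"
      have finA: "finite A" unfolding A_def using fin by auto
      have AS: "A \<subseteq> S" unfolding A_def by auto
      have vA: "v0 \<in> A" unfolding A_def a_def using v0 by auto
      have cA: "card A \<ge> 1" using finA vA by (metis One_nat_def Suc_leI card_gt_0_iff empty_iff)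
      have AM: "A \<subseteq> M"
      proof
        fix x assume xA: "x \<in> A"
        then have "\<phi> x = \<phi> v0" "\<psi> x = \<psi> v0" "x \<in> S" using A2 unfolding A_def a_def by auto
        then show "x \<in> M" unfolding M_def using v0 by auto
      qed
      have mv1: "R E S W (card A) \<phi> \<phi>'"
        unfolding \<phi>'_def by (rule move_class[where oldc=a, OF finA AS _ s(1) s(2) less.prems(1)]) (use A_def in auto)
      have pc': "pcol E S W \<phi>'" "a \<notin> \<phi>' ` S"
        using class_move_props[OF A_def v0(1) a_def[symmetric] s(2) s(1) less.prems(1)] unfolding \<phi>'_def by auto
      have sp': "samepart S \<phi>' \<psi>"
        using class_move_samepart[OF A_def v0(1) a_def[symmetric] s(2) less.prems(2)] unfolding \<phi>'_def by auto
      have aW: "a \<in> W" using less.prems(1) v0 unfolding pcol_def a_def by auto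
      have sps: "s \<notin> \<psi> ` S" using s eqi by auto
      have M': "{x\<in>S. \<phi>' x \<noteq> \<psi> x} = M"
        unfolding M_def \<phi>'_def merge_def using A2 AM sps M_def v0 by auto
      have Q': "{x\<in>S. \<phi>' x \<notin> \<psi> ` S} = A"
        unfolding \<phi>'_def merge_def using A2 AS Q0 Q_def sps by auto
      have AMc: "card A \<le> card M" using AM finM card_mono by blast
      define n' where "n' = 2 * card M - card A"
      have lt: "n' < n" unfolding n'_def n using Q0 cA AMc by simp
      have "R E S W n' \<phi>' \<psi>"
        using less.IH[of n' \<phi>'] lt pc' sp' aW M' Q' n'_def by auto
      then have "R E S W (card A + n') \<phi> \<psi>" using R_trans[OF mv1] by blast
      moreover have "card A + n' = n" unfolding n'_def n using Q0 AMc by simp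
      ultimately show ?thesis by simp
    qed
  qed
qed

lemma rename:
  assumes "finite S" "\<forall>u v. E u v \<longrightarrow> E v u" "pcol E S W \<phi>" "pcol E S W \<psi>"
    "samepart S \<phi> \<psi>" "\<exists>s\<in>W. s \<notin> \<phi> ` S"
  shows "R E S W (2 * card S) \<phi> \<psi>"
proof -
  have "R E S W (2 * card {v\<in>S. \<phi> v \<noteq> \<psi> v} - card {v\<in>S. \<phi> v \<notin> \<psi> ` S}) \<phi> \<psi>"
    using rename_aux[OF assms(1,2,4,3,5,6)] by blast
  moreover have "card {v\<in>S. \<phi> v \<noteq> \<psi> v} \<le> card S" using assms(1) by (intro card_mono) auto
  ultimately show ?thesis using R_mono by fastforce
qed



definition opt :: "('a \<Rightarrow> 'a \<Rightarrow> bool) \<Rightarrow> 'a set \<Rightarrow> ('a \<Rightarrow> nat) \<Rightarrow> bool" where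
  "opt E S \<phi> \<longleftrightarrow> pcol E S UNIV \<phi> \<and> (\<forall>\<psi>. pcol E S UNIV \<psi> \<longrightarrow> card (\<phi> ` S) \<le> card (\<psi> ` S))"

definition Comp :: "('a \<Rightarrow> 'a \<Rightarrow> bool) \<Rightarrow> 'a set \<Rightarrow> bool" where
  "Comp E S \<longleftrightarrow> (\<forall>\<phi> W. pcol E S W \<phi> \<longrightarrow> (\<exists>\<phi>'. R E S W (card S) \<phi> \<phi>' \<and> opt E S \<phi>'))"

definition Align :: "('a \<Rightarrow> 'a \<Rightarrow> bool) \<Rightarrow> 'a set \<Rightarrow> bool" where
  "Align E S \<longleftrightarrow> (\<forall>\<phi> \<psi> W. opt E S \<phi> \<longrightarrow> opt E S \<psi> \<longrightarrow> \<phi> ` S \<subseteq> W \<longrightarrow> (\<exists>r\<in>W. r \<notin> \<phi> ` S)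
      \<longrightarrow> (\<exists>\<phi>'. R E S W (2 * card S) \<phi> \<phi>' \<and> samepart S \<phi>' \<psi>))"

lemma opt_cong: "opt E S \<phi> \<Longrightarrow> eqon S \<phi> \<phi>' \<Longrightarrow> opt E S \<phi>'"
proof -
  assume a: "opt E S \<phi>" "eqon S \<phi> \<phi>'"
  have "\<phi> ` S = \<phi>' ` S" using a(2) unfolding eqon_def by (auto simp: image_iff)
  then show ?thesis using a pcol_cong unfolding opt_def by metis
qed

lemma opt_pcol: "opt E S \<phi> \<Longrightarrow> \<phi> ` S \<subseteq> W \<Longrightarrow> pcol E S W \<phi>"
  unfolding opt_def pcol_def by auto

lemma samepart_opt: "opt E S \<psi> \<Longrightarrow> pcol E S UNIV \<phi> \<Longrightarrow> samepart S \<phi> \<psi> \<Longrightarrow> opt E S \<phi>"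
  unfolding opt_def using samepart_card by metis

lemma opt_card_eq: "opt E S \<phi> \<Longrightarrow> opt E S \<psi> \<Longrightarrow> card (\<phi> ` S) = card (\<psi> ` S)"
  unfolding opt_def by (simp add: le_antisym)

lemma free_colour:
  assumes "finite S" "card (\<phi>' ` S) \<le> card (\<phi> ` S)" "\<phi> ` S \<subseteq> W" "r \<in> W" "r \<notin> \<phi> ` S"
  shows "\<exists>r'\<in>W. r' \<notin> \<phi>' ` S"
proof (rule ccontr)
  assume "\<not> ?thesis"
  then have WS: "W \<subseteq> \<phi>' ` S" by auto
  then have fW: "finite W" using assms(1) finite_subset by blast
  have "\<phi> ` S \<subset> W" using assms by auto
  then have "card (\<phi> ` S) < card W" using fW psubset_card_mono by blast
  moreover have "card W \<le> card (\<phi>' ` S)" using WS assms(1) card_mono by blast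
  ultimately show False using assms(2) by simp
qed

locale joinctx =
  fixes E :: "'a \<Rightarrow> 'a \<Rightarrow> bool" and S A B :: "'a set"
  assumes fin: "finite S" and SAB: "S = A \<union> B" and disj: "A \<inter> B = {}"
    and cross: "\<forall>a\<in>A. \<forall>b\<in>B. E a b" and symE: "\<forall>u v. E u v \<longrightarrow> E v u"
begin

lemma finA: "finite A" using fin SAB by auto
lemma finB: "finite B" using fin SAB by auto

lemma img_disj: "pcol E S W \<phi> \<Longrightarrow> \<phi> ` A \<inter> \<phi> ` B = {}"
  unfolding pcol_def using cross SAB by fastforce

lemma card_split: "pcol E S W \<phi> \<Longrightarrow> card (\<phi> ` S) = card (\<phi> ` A) + card (\<phi> ` B)"
  using img_disj[of W \<phi>] finA finB SAB by (simp add: image_Un card_Un_disjoint)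

end

lemma opt_restrict_gen:
  assumes fin: "finite S" and SAB: "S = A \<union> B" and disj: "A \<inter> B = {}"
    and cross: "\<forall>a\<in>A. \<forall>b\<in>B. E a b \<and> E b a"
    and o: "opt E S \<phi>"
  shows "opt E A \<phi>"
proof -
  have pc: "pcol E S UNIV \<phi>" using o unfolding opt_def by auto
  have finB: "finite B" and finA: "finite A" using fin SAB by auto
  have dj: "\<phi> ` A \<inter> \<phi> ` B = {}" using pc cross SAB unfolding pcol_def by fastforce
  have csplit: "card (\<phi> ` S) = card (\<phi> ` A) + card (\<phi> ` B)"
    using dj finA finB SAB by (simp add: image_Un card_Un_disjoint)
  show ?thesis unfolding opt_def
  proof (intro conjI allI impI)
    show "pcol E A UNIV \<phi>" using pc SAB pcol_subset by blast
    fix \<psi> assume ps: "pcol E A UNIV \<psi>"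
    define K where "K = Suc (Max (insert 0 (\<phi> ` B)))"
    have Kb: "\<forall>b\<in>B. \<phi> b < K" unfolding K_def using finB
      by (metis Max_ge finite_imageI finite_insert image_eqI insertCI le_imp_less_Suc)
    define \<psi>2 where "\<psi>2 = (\<lambda>x. if x \<in> A then \<psi> x + K else \<phi> x)"
    have pc2: "pcol E S UNIV \<psi>2" unfolding pcol_def
    proof (intro conjI ballI impI)
      fix x y assume xy: "x \<in> S" "y \<in> S" "E x y"
      show "\<psi>2 x \<noteq> \<psi>2 y"
      proof (cases "x \<in> A")
        case True
        show ?thesis
        proof (cases "y \<in> A")
          case True
          then show ?thesis using \<open>x \<in> A\<close> ps xy unfolding pcol_def \<psi>2_def by auto
        next
          case False
          then have "y \<in> B" using xy SAB by auto
          then show ?thesis using \<open>x \<in> A\<close> False Kb unfolding \<psi>2_def by fastforce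
        qed
      next
        case False
        then have xB: "x \<in> B" using xy SAB by auto
        show ?thesis
        proof (cases "y \<in> A")
          case True
          then show ?thesis using False xB Kb unfolding \<psi>2_def by fastforce
        next
          case False2: False
          then show ?thesis using False pc xy unfolding pcol_def \<psi>2_def by auto
        qed
      qed
    qed simp
    have img: "\<psi>2 ` S = (\<lambda>c. c + K) ` (\<psi> ` A) \<union> \<phi> ` B"
      unfolding \<psi>2_def SAB using disj by (auto simp: image_iff) 
    have dj2: "(\<lambda>c. c + K) ` (\<psi> ` A) \<inter> \<phi> ` B = {}" using Kb by fastforce
    have "card (\<psi>2 ` S) = card ((\<lambda>c. c + K) ` (\<psi> ` A)) + card (\<phi> ` B)"
      unfolding img using dj2 finA finB by (simp add: card_Un_disjoint)
    also have "card ((\<lambda>c. c + K) ` (\<psi> ` A)) = card (\<psi> ` A)" by (simp add: card_image)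
    finally have "card (\<psi>2 ` S) = card (\<psi> ` A) + card (\<phi> ` B)" .
    moreover have "card (\<phi> ` S) \<le> card (\<psi>2 ` S)" using o pc2 unfolding opt_def by blast
    ultimately show "card (\<phi> ` A) \<le> card (\<psi> ` A)" using csplit by simp
  qed
qed

context joinctx
begin

lemma optA: "opt E S \<phi> \<Longrightarrow> opt E A \<phi>"
  using opt_restrict_gen[OF fin SAB disj] cross symE by blast

lemma optB: "opt E S \<phi> \<Longrightarrow> opt E B \<phi>"
  using opt_restrict_gen[OF fin _ _, of B A] SAB disj cross symE by (metis inf_commute sup_commute)

lemma opt_combine:
  assumes "pcol E S UNIV \<phi>" "opt E A \<phi>" "opt E B \<phi>"
  shows "opt E S \<phi>"
  unfolding opt_def
proof (intro conjI allI impI)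
  show "pcol E S UNIV \<phi>" by fact
  fix \<psi> assume ps: "pcol E S UNIV \<psi>"
  have "card (\<psi> ` A) \<ge> card (\<phi> ` A)" using assms(2) ps SAB pcol_subset unfolding opt_def by blast
  moreover have "card (\<psi> ` B) \<ge> card (\<phi> ` B)" using assms(3) ps SAB pcol_subset unfolding opt_def by blast
  ultimately show "card (\<phi> ` S) \<le> card (\<psi> ` S)" using card_split[OF ps] card_split[OF assms(1)] by simp
qed

lemma comp_join:
  assumes cA: "Comp E A" and cB: "Comp E B"
  shows "Comp E S"
  unfolding Comp_def
proof (intro allI impI)
  fix \<phi> W assume pc: "pcol E S W \<phi>"
  have pcA: "pcol E A (\<phi> ` A) \<phi>" using pc SAB unfolding pcol_def by auto
  obtain \<phi>1 where p1: "R E A (\<phi> ` A) (card A) \<phi> \<phi>1" "opt E A \<phi>1"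
    using cA pcA unfolding Comp_def by blast
  define \<phi>1' where "\<phi>1' = merge A \<phi>1 \<phi>"
  have cond1: "\<forall>w\<in>S - A. \<forall>v\<in>A. E v w \<longrightarrow> \<phi> w \<notin> \<phi> ` A"
    using img_disj[OF pc] SAB disj by auto
  have r1: "R E S (\<phi> ` A) (card A) \<phi> \<phi>1'"
    unfolding \<phi>1'_def using R_lift[OF p1(1) _ cond1] SAB by auto
  have pc1A: "pcol E A (\<phi> ` A) \<phi>1" using R_pcol[OF p1(1) pcA symE] .
  have WA: "\<phi> ` A \<subseteq> W" using pc SAB unfolding pcol_def by auto
  have r1W: "R E S W (card A) \<phi> \<phi>1'" using R_palette[OF r1 WA] .
  have pc1: "pcol E S W \<phi>1'" using R_pcol[OF r1W pc symE] .
  have eqB: "eqon B \<phi>1' \<phi>" unfolding \<phi>1'_def merge_def eqon_def using disj by auto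
  have pcB: "pcol E B (\<phi>1' ` B) \<phi>1'" using pc1 SAB unfolding pcol_def by auto
  obtain \<phi>2 where p2: "R E B (\<phi>1' ` B) (card B) \<phi>1' \<phi>2" "opt E B \<phi>2"
    using cB pcB unfolding Comp_def by blast
  define \<phi>2' where "\<phi>2' = merge B \<phi>2 \<phi>1'"
  have SB: "S - B = A" using SAB disj by auto
  have cond2: "\<forall>w\<in>S - B. \<forall>v\<in>B. E v w \<longrightarrow> \<phi>1' w \<notin> \<phi>1' ` B"
    using img_disj[OF pc1] SB by auto
  have r2: "R E S (\<phi>1' ` B) (card B) \<phi>1' \<phi>2'"
    unfolding \<phi>2'_def using R_lift[OF p2(1) _ cond2] SAB by auto
  have WB: "\<phi>1' ` B \<subseteq> W" using pc1 SAB unfolding pcol_def by auto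
  have r2W: "R E S W (card B) \<phi>1' \<phi>2'" using R_palette[OF r2 WB] .
  have rr: "R E S W (card S) \<phi> \<phi>2'"
    using R_trans[OF r1W r2W] finA finB disj SAB by (simp add: card_Un_disjoint)
  have pc2: "pcol E S UNIV \<phi>2'" using R_pcol[OF rr pc symE] pcol_subset by blast
  have oA: "opt E A \<phi>2'"
    by (rule opt_cong[OF p1(2)]) (use disj in \<open>auto simp: eqon_def \<phi>2'_def \<phi>1'_def merge_def\<close>)
  have oB: "opt E B \<phi>2'"
    by (rule opt_cong[OF p2(2)]) (auto simp: eqon_def \<phi>2'_def merge_def)
  show "\<exists>\<phi>'. R E S W (card S) \<phi> \<phi>' \<and> opt E S \<phi>'"
    using rr opt_combine[OF pc2 oA oB] by blast
qed

lemma align_join: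
  assumes aA: "Align E A" and aB: "Align E B"
  shows "Align E S"
  unfolding Align_def
proof (intro allI impI)
  fix \<phi> \<psi> W assume o1: "opt E S \<phi>" and o2: "opt E S \<psi>" and sub: "\<phi> ` S \<subseteq> W"
    and fr: "\<exists>r\<in>W. r \<notin> \<phi> ` S"
  obtain r where r: "r \<in> W" "r \<notin> \<phi> ` S" using fr by blast
  have pc: "pcol E S W \<phi>" using opt_pcol[OF o1 sub] .
  define WA where "WA = insert r (\<phi> ` A)"
  have "\<exists>\<phi>1. R E A WA (2 * card A) \<phi> \<phi>1 \<and> samepart A \<phi>1 \<psi>"
    using aA optA[OF o1] optA[OF o2] r SAB unfolding Align_def WA_def by blast
  then obtain \<phi>1 where p1: "R E A WA (2 * card A) \<phi> \<phi>1" "samepart A \<phi>1 \<psi>" by blast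
  define \<phi>1' where "\<phi>1' = merge A \<phi>1 \<phi>"
  have cond1: "\<forall>w\<in>S - A. \<forall>v\<in>A. E v w \<longrightarrow> \<phi> w \<notin> WA"
    using img_disj[OF pc] SAB disj r unfolding WA_def by auto
  have r1: "R E S WA (2 * card A) \<phi> \<phi>1'"
    unfolding \<phi>1'_def using R_lift[OF p1(1) _ cond1] SAB by auto
  have WAW: "WA \<subseteq> W" using r sub SAB unfolding WA_def by auto
  have r1W: "R E S W (2 * card A) \<phi> \<phi>1'" using R_palette[OF r1 WAW] .
  have pc1: "pcol E S W \<phi>1'" using R_pcol[OF r1W pc symE] .
  have pc1U: "pcol E S UNIV \<phi>1'" using pc1 pcol_subset by blast
  have sp1: "samepart A \<phi>1' \<psi>" using p1(2) unfolding samepart_def \<phi>1'_def merge_def by auto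
  have oA1: "opt E A \<phi>1'" using samepart_opt[OF optA[OF o2] _ sp1] pc1U SAB pcol_subset by blast
  have oB1: "opt E B \<phi>1'"
    by (rule opt_cong[OF optB[OF o1]]) (use disj in \<open>auto simp: eqon_def \<phi>1'_def merge_def\<close>)
  have o1': "opt E S \<phi>1'" using opt_combine[OF pc1U oA1 oB1] .
  have "card (\<phi>1' ` S) \<le> card (\<phi> ` S)" using opt_card_eq[OF o1' o1] by simp
  then obtain r' where r': "r' \<in> W" "r' \<notin> \<phi>1' ` S" using free_colour[OF fin _ sub r] by blast
  define WB where "WB = insert r' (\<phi>1' ` B)"
  have "\<exists>\<phi>2. R E B WB (2 * card B) \<phi>1' \<phi>2 \<and> samepart B \<phi>2 \<psi>"
    using aB oB1 optB[OF o2] r' SAB unfolding Align_def WB_def by blast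
  then obtain \<phi>2 where p2: "R E B WB (2 * card B) \<phi>1' \<phi>2" "samepart B \<phi>2 \<psi>" by blast
  define \<phi>2' where "\<phi>2' = merge B \<phi>2 \<phi>1'"
  have SB: "S - B = A" using SAB disj by auto
  have cond2: "\<forall>w\<in>S - B. \<forall>v\<in>B. E v w \<longrightarrow> \<phi>1' w \<notin> WB"
    using img_disj[OF pc1] SB r' SAB unfolding WB_def by auto
  have r2: "R E S WB (2 * card B) \<phi>1' \<phi>2'"
    unfolding \<phi>2'_def using R_lift[OF p2(1) _ cond2] SAB by auto
  have WBW: "WB \<subseteq> W" using r' pc1 SAB unfolding WB_def pcol_def by auto
  have r2W: "R E S W (2 * card B) \<phi>1' \<phi>2'" using R_palette[OF r2 WBW] .
  have rr: "R E S W (2 * card S) \<phi> \<phi>2'"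
    using R_trans[OF r1W r2W] finA finB disj SAB by (simp add: card_Un_disjoint)
  have pc2: "pcol E S W \<phi>2'" using R_pcol[OF rr pc symE] .
  have pcps: "pcol E S UNIV \<psi>" using o2 unfolding opt_def by auto
  have "samepart S \<phi>2' \<psi>" unfolding samepart_def
  proof (intro ballI)
    fix x y assume xy: "x \<in> S" "y \<in> S"
    show "(\<phi>2' x = \<phi>2' y) = (\<psi> x = \<psi> y)"
    proof (cases "x \<in> A")
      case True
      show ?thesis
      proof (cases "y \<in> A")
        case True
        then show ?thesis using \<open>x \<in> A\<close> sp1 disj unfolding samepart_def \<phi>2'_def merge_def by auto
      next
        case False
        then have yB: "y \<in> B" using xy SAB by auto
        have "E x y" using cross True yB by auto
        then show ?thesis using pc2 pcps xy unfolding pcol_def by auto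
      qed
    next
      case False
      then have xB: "x \<in> B" using xy SAB by auto
      show ?thesis
      proof (cases "y \<in> A")
        case True
        have "E x y" using cross True xB symE by auto
        then show ?thesis using pc2 pcps xy unfolding pcol_def by auto
      next
        case False
        then have yB: "y \<in> B" using xy SAB by auto
        then show ?thesis using xB p2(2) unfolding samepart_def \<phi>2'_def merge_def by auto
      qed
    qed
  qed
  then show "\<exists>\<phi>'. R E S W (2 * card S) \<phi> \<phi>' \<and> samepart S \<phi>' \<psi>" using rr by blast
qed

end



definition P3free :: "('a \<Rightarrow> 'a \<Rightarrow> bool) \<Rightarrow> 'a set \<Rightarrow> bool" where
  "P3free E Q \<longleftrightarrow> (\<forall>u\<in>Q. \<forall>v\<in>Q. \<forall>w\<in>Q. E u v \<longrightarrow> E v w \<longrightarrow> u \<noteq> w \<longrightarrow> E u w)"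

definition clique :: "('a \<Rightarrow> 'a \<Rightarrow> bool) \<Rightarrow> 'a set \<Rightarrow> bool" where
  "clique E K \<longleftrightarrow> (\<forall>x\<in>K. \<forall>y\<in>K. x \<noteq> y \<longrightarrow> E x y)"

lemma clique_inj: "pcol E S W \<phi> \<Longrightarrow> K \<subseteq> S \<Longrightarrow> clique E K \<Longrightarrow> inj_on \<phi> K"
  unfolding inj_on_def pcol_def clique_def by blast

lemma nbhd_clique:
  assumes "P3free E S" "\<forall>u v. E u v \<longrightarrow> E v u" "v \<in> S"
  shows "clique E {u\<in>S. u = v \<or> E v u}"
  unfolding clique_def
proof (intro ballI impI)
  fix x y assume x: "x \<in> {u\<in>S. u = v \<or> E v u}" and y: "y \<in> {u\<in>S. u = v \<or> E v u}" and xy: "x \<noteq> y"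
  show "E x y"
  proof (cases "x = v")
    case True then show ?thesis using y xy by auto
  next
    case False
    then have evx: "E v x" using x by auto
    show ?thesis
    proof (cases "y = v")
      case True then show ?thesis using evx assms(2) by auto
    next
      case False
      then have "E v y" using y by auto
      moreover have "E x v" using evx assms(2) by auto
      ultimately show ?thesis using assms(1) x y xy assms(3) unfolding P3free_def by blast
    qed
  qed
qed

lemma cluster_comp:
  assumes fin: "finite S" and p3: "P3free E S" and symE: "\<forall>u v. E u v \<longrightarrow> E v u"
  shows "Comp E S"
  unfolding Comp_def
proof (intro allI impI)
  fix \<phi> W assume pc: "pcol E S W \<phi>"
  obtain Ks where Ks: "Ks \<subseteq> S" "clique E Ks" "\<forall>K. K \<subseteq> S \<and> clique E K \<longrightarrow> card K \<le> card Ks"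
  proof -
    have b: "\<forall>K. K \<subseteq> S \<and> clique E K \<longrightarrow> card K < Suc (card S)" using fin card_mono by (simp add: card_mono less_Suc_eq_le)
    have "{} \<subseteq> S \<and> clique E {}" by (simp add: clique_def)
    from ex_has_greatest_nat[of "\<lambda>K. K \<subseteq> S \<and> clique E K" "{}" card "Suc (card S)", OF this b]
    show ?thesis using that by blast
  qed
  define Z where "Z = \<phi> ` Ks"
  have cZ: "card Z = card Ks" unfolding Z_def using clique_inj[OF pc Ks(1,2)] card_image by blast
  have finKs: "finite Ks" using Ks fin finite_subset by blast
  have claim: "\<And>n \<phi>'. pcol E S W \<phi>' \<Longrightarrow> eqon Ks \<phi>' \<phi> \<Longrightarrow> card {v\<in>S. \<phi>' v \<notin> Z} = n \<Longrightarrow>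
     \<exists>\<phi>''. R E S W n \<phi>' \<phi>'' \<and> (\<forall>x\<in>S. \<phi>'' x \<in> Z)"
  proof -
    fix n show "\<And>\<phi>'. pcol E S W \<phi>' \<Longrightarrow> eqon Ks \<phi>' \<phi> \<Longrightarrow> card {v\<in>S. \<phi>' v \<notin> Z} = n \<Longrightarrow>
     \<exists>\<phi>''. R E S W n \<phi>' \<phi>'' \<and> (\<forall>x\<in>S. \<phi>'' x \<in> Z)"
    proof (induction n)
      case 0
      then have "\<forall>x\<in>S. \<phi>' x \<in> Z" using fin by auto
      then show ?case using R_refl by blast
    next
      case (Suc m \<phi>')
      have "{v\<in>S. \<phi>' v \<notin> Z} \<noteq> {}" using Suc.prems(3) by force
      then obtain v where v: "v \<in> S" "\<phi>' v \<notin> Z" by blast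
      define Nb where "Nb = {u\<in>S. E v u}"
      have "insert v Nb = {u\<in>S. u = v \<or> E v u}" unfolding Nb_def using v by auto
      then have cl: "clique E (insert v Nb)" using nbhd_clique[OF p3 symE v(1)] by simp
      have vNb: "v \<notin> Nb" using Suc.prems(1) v unfolding Nb_def pcol_def by blast
      have finNb: "finite Nb" unfolding Nb_def using fin by auto
      have "card (insert v Nb) \<le> card Ks" using Ks(3) cl v unfolding Nb_def by auto
      then have cN: "card Nb < card Z" using vNb finNb cZ by simp
      have "\<not> Z \<subseteq> \<phi>' ` Nb"
      proof
        assume "Z \<subseteq> \<phi>' ` Nb"
        then have "card Z \<le> card (\<phi>' ` Nb)" using finNb card_mono by blast
        also have "\<dots> \<le> card Nb" using card_image_le finNb by blast
        finally show False using cN by simp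
      qed
      then obtain z where z: "z \<in> Z" "z \<notin> \<phi>' ` Nb" by blast
      have zW: "z \<in> W" using z Suc.prems(1,2) Ks(1) unfolding Z_def pcol_def eqon_def by force
      define \<phi>3 where "\<phi>3 = \<phi>'(v := z)"
      have mv: "mv E S W \<phi>' \<phi>3" unfolding mv_def \<phi>3_def
        apply (rule bexI[of _ v], rule bexI[of _ z])
        using v z zW unfolding Nb_def by (auto simp: image_iff)
      have pc3: "pcol E S W \<phi>3" using mv_pcol[OF mv Suc.prems(1) symE] .
      have vKs: "v \<notin> Ks" using v Suc.prems(2) unfolding Z_def eqon_def by force
      have eq3: "eqon Ks \<phi>3 \<phi>" using Suc.prems(2) vKs unfolding eqon_def \<phi>3_def by auto
      have "{x\<in>S. \<phi>3 x \<notin> Z} = {x\<in>S. \<phi>' x \<notin> Z} - {v}" unfolding \<phi>3_def using z by auto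
      then have "card {x\<in>S. \<phi>3 x \<notin> Z} = m" using Suc.prems(3) v fin by simp
      then obtain \<phi>'' where "R E S W m \<phi>3 \<phi>''" "\<forall>x\<in>S. \<phi>'' x \<in> Z" using Suc.IH pc3 eq3 by blast
      then show ?case using R.R_step[OF mv] by blast
    qed
  qed
  obtain \<phi>'' where ph: "R E S W (card {v\<in>S. \<phi> v \<notin> Z}) \<phi> \<phi>''" "\<forall>x\<in>S. \<phi>'' x \<in> Z"
    using claim[OF pc eqon_refl refl] by blast
  have rr: "R E S W (card S) \<phi> \<phi>''" using R_mono[OF ph(1)] fin by (simp add: card_mono)
  have pc2: "pcol E S UNIV \<phi>''" using R_pcol[OF rr pc symE] pcol_subset by blast
  have "opt E S \<phi>''" unfolding opt_def
  proof (intro conjI allI impI)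
    show "pcol E S UNIV \<phi>''" by fact
    fix \<psi> assume ps: "pcol E S UNIV \<psi>"
    have "card (\<phi>'' ` S) \<le> card Z" using ph(2) cZ finKs by (intro card_mono) (auto simp: Z_def)
    also have "\<dots> = card (\<psi> ` Ks)" using cZ clique_inj[OF ps Ks(1,2)] card_image by metis
    also have "\<dots> \<le> card (\<psi> ` S)" using Ks(1) fin by (intro card_mono) auto
    finally show "card (\<phi>'' ` S) \<le> card (\<psi> ` S)" .
  qed
  then show "\<exists>\<phi>'. R E S W (card S) \<phi> \<phi>' \<and> opt E S \<phi>'" using rr by blast
qed

lemma cluster_rename:
  assumes symE: "\<forall>u v. E u v \<longrightarrow> E v u"
  shows "finite S \<Longrightarrow> P3free E S \<Longrightarrow> pcol E S W \<phi> \<Longrightarrow> pcol E S W \<tau> \<Longrightarrow> r \<in> W \<Longrightarrow> r \<notin> \<phi> ` S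
    \<Longrightarrow> R E S W (2 * card S) \<phi> \<tau>"
proof (induction "card S" arbitrary: S \<phi> rule: less_induct)
  case less
  show ?case
  proof (cases "S = {}")
    case True
    then show ?thesis by (intro R.R_base) (auto simp: eqon_def)
  next
    case False
    then obtain v where v: "v \<in> S" by blast
    define K where "K = {u\<in>S. u = v \<or> E v u}"
    have KS: "K \<subseteq> S" unfolding K_def by auto
    have vK: "v \<in> K" unfolding K_def using v by auto
    have cl: "clique E K" unfolding K_def using nbhd_clique[OF less.prems(2) symE v] .
    have noedge: "\<forall>u\<in>K. \<forall>w\<in>S - K. \<not> E u w"
    proof (intro ballI notI)
      fix u w assume u: "u \<in> K" and w: "w \<in> S - K" and e: "E u w"
      show False
      proof (cases "u = v")
        case True then show ?thesis using w e unfolding K_def by auto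
      next
        case False
        then have "E v u" "u \<in> S" using u unfolding K_def by auto
        moreover have "v \<noteq> w" using w vK by auto
        ultimately have "E v w" using less.prems(2) e v w unfolding P3free_def by blast
        then show ?thesis using w unfolding K_def by auto
      qed
    qed
    have finK: "finite K" using KS less.prems(1) finite_subset by blast
    have spK: "samepart K \<phi> \<tau>"
      using clique_inj[OF less.prems(3) KS cl] clique_inj[OF less.prems(4) KS cl]
      unfolding samepart_def inj_on_def by blast
    have rK: "R E K W (2 * card K) \<phi> \<tau>"
      using rename[OF finK symE pcol_subset[OF less.prems(3) KS] pcol_subset[OF less.prems(4) KS] spK]
        less.prems(5,6) KS by blast
    define \<phi>1 where "\<phi>1 = merge K \<tau> \<phi>"
    have r1: "R E S W (2 * card K) \<phi> \<phi>1"
      unfolding \<phi>1_def using R_lift[OF rK KS] noedge by blast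
    define S' where "S' = S - K"
    have S'S: "S' \<subseteq> S" unfolding S'_def by auto
    have "S' \<subset> S" unfolding S'_def using vK KS by auto
    then have lt: "card S' < card S" using less.prems(1) psubset_card_mono by blast
    have pc1: "pcol E S' W \<phi>1" using pcol_subset[OF less.prems(3) S'S] unfolding \<phi>1_def S'_def
      by (rule pcol_cong) (auto simp: eqon_def merge_def)
    have p3': "P3free E S'" using less.prems(2) S'S unfolding P3free_def by blast
    have r1': "r \<notin> \<phi>1 ` S'" using less.prems(6) unfolding \<phi>1_def S'_def merge_def by auto
    have rS': "R E S' W (2 * card S') \<phi>1 \<tau>"
      using less.hyps[OF lt _ p3' pc1 pcol_subset[OF less.prems(4) S'S] less.prems(5) r1'] less.prems(1) S'S
        finite_subset by blast
    have noedge2: "\<forall>w\<in>S - S'. \<forall>u\<in>S'. E u w \<longrightarrow> \<phi>1 w \<notin> W"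
      using noedge symE unfolding S'_def by blast
    have r2: "R E S W (2 * card S') \<phi>1 (merge S' \<tau> \<phi>1)" using R_lift[OF rS' S'S noedge2] .
    have "eqon S (merge S' \<tau> \<phi>1) \<tau>" unfolding eqon_def merge_def \<phi>1_def S'_def by auto
    then have r2': "R E S W (2 * card S') \<phi>1 \<tau>" using R_cong2[OF r2] by blast
    have "card S = card K + card S'" unfolding S'_def using KS finK less.prems(1)
      by (metis card_Diff_subset card_mono le_add_diff_inverse)
    then show ?thesis using R_trans[OF r1 r2'] by (simp add: algebra_simps)
  qed
qed

lemma cluster_align:
  assumes fin: "finite S" and p3: "P3free E S" and symE: "\<forall>u v. E u v \<longrightarrow> E v u"
  shows "Align E S"
  unfolding Align_def
proof (intro allI impI)
  fix \<phi> \<psi> W assume o1: "opt E S \<phi>" and o2: "opt E S \<psi>" and sub: "\<phi> ` S \<subseteq> W"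
    and fr: "\<exists>r\<in>W. r \<notin> \<phi> ` S"
  obtain r where r: "r \<in> W" "r \<notin> \<phi> ` S" using fr by blast
  have "card (\<psi> ` S) = card (\<phi> ` S)" using opt_card_eq[OF o2 o1] .
  then obtain \<sigma> where \<sigma>: "bij_betw \<sigma> (\<psi> ` S) (\<phi> ` S)" using finite_same_card_bij fin by blast
  define \<tau> where "\<tau> = (\<lambda>x. \<sigma> (\<psi> x))"
  have inj\<sigma>: "inj_on \<sigma> (\<psi> ` S)" using \<sigma> bij_betw_def by blast
  have pc\<psi>: "pcol E S UNIV \<psi>" using o2 unfolding opt_def by auto
  have pc\<tau>: "pcol E S W \<tau>" unfolding pcol_def
  proof (intro conjI ballI impI)
    fix x assume "x \<in> S" then show "\<tau> x \<in> W" using \<sigma> sub unfolding \<tau>_def bij_betw_def by auto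
  next
    fix x y assume xy: "x \<in> S" "y \<in> S" "E x y"
    then have "\<psi> x \<noteq> \<psi> y" using pc\<psi> unfolding pcol_def by auto
    then show "\<tau> x \<noteq> \<tau> y" using inj\<sigma> xy unfolding \<tau>_def inj_on_def by auto
  qed
  have sp: "samepart S \<tau> \<psi>" using inj\<sigma> unfolding samepart_def \<tau>_def inj_on_def by auto
  have "R E S W (2 * card S) \<phi> \<tau>"
    using cluster_rename[OF symE fin p3 opt_pcol[OF o1 sub] pc\<tau> r] .
  then show "\<exists>\<phi>'. R E S W (2 * card S) \<phi> \<phi>' \<and> samepart S \<phi>' \<psi>" using sp by blast
qed



definition indep3 :: "('a \<Rightarrow> 'a \<Rightarrow> bool) \<Rightarrow> 'a set \<Rightarrow> bool" where
  "indep3 E S \<longleftrightarrow> (\<exists>a\<in>S. \<exists>b\<in>S. \<exists>c\<in>S. a \<noteq> b \<and> a \<noteq> c \<and> b \<noteq> c \<and> \<not> E a b \<and> \<not> E a c \<and> \<not> E b c)"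

definition DD :: "'a set \<Rightarrow> ('a \<Rightarrow> nat) \<Rightarrow> ('a \<Rightarrow> nat) \<Rightarrow> ('a \<times> 'a) set" where
  "DD S \<phi> \<psi> = {(x,y). x \<in> S \<and> y \<in> S \<and> x \<noteq> y \<and> (\<phi> x = \<phi> y) \<noteq> (\<psi> x = \<psi> y)}"

definition PP :: "'a set \<Rightarrow> ('a \<Rightarrow> nat) \<Rightarrow> ('a \<times> 'a) set" where
  "PP S \<phi> = {(x,y). x \<in> S \<and> y \<in> S \<and> x \<noteq> y \<and> \<phi> x = \<phi> y}"

definition MT :: "'a set \<Rightarrow> ('a \<Rightarrow> nat) \<Rightarrow> 'a set" where
  "MT S \<phi> = {x\<in>S. \<exists>y\<in>S. y \<noteq> x \<and> \<phi> y = \<phi> x}"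

definition terminal :: "'a set \<Rightarrow> ('a \<Rightarrow> nat) \<Rightarrow> ('a \<Rightarrow> nat) \<Rightarrow> bool" where
  "terminal S \<phi> \<psi> \<longleftrightarrow> (\<forall>u\<in>S. \<forall>t\<in>S. u \<noteq> t \<and> \<psi> u = \<psi> t \<and> \<phi> u \<noteq> \<phi> t \<longrightarrow> (\<exists>u'\<in>S. u' \<noteq> u \<and> \<phi> u' = \<phi> u))"

locale tk1 =
  fixes E :: "'a \<Rightarrow> 'a \<Rightarrow> bool" and S :: "'a set"
  assumes fin: "finite S" and no3: "\<not> indep3 E S" and symE: "\<forall>u v. E u v \<longrightarrow> E v u"
begin

lemma no3col:
  assumes "pcol E S W \<phi>" "x \<in> S" "y \<in> S" "z \<in> S" "x \<noteq> y" "x \<noteq> z" "y \<noteq> z" "\<phi> x = \<phi> y" "\<phi> x = \<phi> z"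
  shows False
proof -
  have "\<not> E x y" "\<not> E x z" "\<not> E y z" using assms unfolding pcol_def by metis+
  then show False using no3 assms unfolding indep3_def by blast
qed

lemma finD: "finite (DD S \<phi> \<psi>)"
proof -
  have "DD S \<phi> \<psi> \<subseteq> S \<times> S" unfolding DD_def by auto
  then show ?thesis using fin finite_subset by blast
qed

lemma finPP: "finite (PP S \<phi>)"
proof -
  have "PP S \<phi> \<subseteq> S \<times> S" unfolding PP_def by auto
  then show ?thesis using fin finite_subset by blast
qed

lemma card_PP: assumes "pcol E S W \<phi>" shows "card (PP S \<phi>) \<le> card S"
proof -
  define p where "p x = (SOME y. y \<in> S \<and> y \<noteq> x \<and> \<phi> y = \<phi> x)" for x
  have "PP S \<phi> \<subseteq> (\<lambda>x. (x, p x)) ` S"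
  proof
    fix xy assume "xy \<in> PP S \<phi>"
    then obtain x y where xy: "xy = (x,y)" "x \<in> S" "y \<in> S" "x \<noteq> y" "\<phi> x = \<phi> y" unfolding PP_def by auto
    have ex: "\<exists>y. y \<in> S \<and> y \<noteq> x \<and> \<phi> y = \<phi> x" using xy by auto
    have "p x \<in> S \<and> p x \<noteq> x \<and> \<phi> (p x) = \<phi> x" unfolding p_def using someI_ex[OF ex] .
    then have "p x = y" using no3col[OF assms, of x y "p x"] xy by metis
    then show "xy \<in> (\<lambda>x. (x, p x)) ` S" using xy by auto
  qed
  then have "card (PP S \<phi>) \<le> card ((\<lambda>x. (x, p x)) ` S)" using fin by (intro card_mono) auto
  also have "\<dots> \<le> card S" using card_image_le fin by blast
  finally show ?thesis .
qed

lemma card_DD: assumes "pcol E S W \<phi>" "pcol E S W' \<psi>" shows "card (DD S \<phi> \<psi>) \<le> 2 * card S"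
proof -
  have "DD S \<phi> \<psi> \<subseteq> PP S \<phi> \<union> PP S \<psi>" unfolding DD_def PP_def by auto
  then have "card (DD S \<phi> \<psi>) \<le> card (PP S \<phi> \<union> PP S \<psi>)"
    using finPP[of \<phi>] finPP[of \<psi>] by (intro card_mono) auto
  also have "\<dots> \<le> card (PP S \<phi>) + card (PP S \<psi>)" by (rule card_Un_le)
  finally show ?thesis using card_PP[OF assms(1)] card_PP[OF assms(2)] by simp
qed

lemma card_formula:
  assumes pc: "pcol E S W \<phi>"
  shows "2 * card (\<phi> ` S) + card (MT S \<phi>) = 2 * card S"
proof -
  define U where "U = S - MT S \<phi>"
  have MS: "MT S \<phi> \<subseteq> S" unfolding MT_def by auto
  have finM: "finite (MT S \<phi>)" using fin MS finite_subset by blast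
  have finU: "finite U" using fin unfolding U_def by auto
  have SU: "S = U \<union> MT S \<phi>" unfolding U_def using MS by auto
  have injU: "inj_on \<phi> U" unfolding inj_on_def U_def MT_def by auto
  have dj: "\<phi> ` U \<inter> \<phi> ` MT S \<phi> = {}"
  proof -
    { fix u m assume u: "u \<in> U" and m: "m \<in> MT S \<phi>" and e: "\<phi> u = \<phi> m"
      have "m \<noteq> u" using u m unfolding U_def by auto
      then have "u \<in> MT S \<phi>" using u m e unfolding U_def MT_def by auto
      then have False using u unfolding U_def by auto }
    then show ?thesis by blast
  qed
  have c1: "card (\<phi> ` S) = card U + card (\<phi> ` MT S \<phi>)"
    using SU dj finU finM injU by (metis card_Un_disjoint card_image finite_imageI image_Un)
  have dUM: "U \<inter> MT S \<phi> = {}" unfolding U_def by auto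
  have c2: "card S = card U + card (MT S \<phi>)" using SU dUM finU finM by (metis card_Un_disjoint)
  have fib: "card {x. x \<in> MT S \<phi> \<and> \<phi> x = c} = 2" if c: "c \<in> \<phi> ` MT S \<phi>" for c
  proof -
    obtain m where m: "m \<in> MT S \<phi>" "\<phi> m = c" using c by auto
    then obtain m' where m': "m' \<in> S" "m' \<noteq> m" "\<phi> m' = \<phi> m" unfolding MT_def by auto
    have m'M: "m' \<in> MT S \<phi>" unfolding MT_def using m' m MS by auto
    have "{x. x \<in> MT S \<phi> \<and> \<phi> x = c} = {m, m'}"
    proof
      show "{m, m'} \<subseteq> {x. x \<in> MT S \<phi> \<and> \<phi> x = c}" using m m' m'M by auto
      show "{x. x \<in> MT S \<phi> \<and> \<phi> x = c} \<subseteq> {m, m'}"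
      proof
        fix x assume x: "x \<in> {x. x \<in> MT S \<phi> \<and> \<phi> x = c}"
        show "x \<in> {m, m'}"
        proof (rule ccontr)
          assume "x \<notin> {m, m'}"
          then show False using no3col[OF pc, of m m' x] m m' x MS by auto
        qed
      qed
    qed
    then show ?thesis using m'(2) by auto
  qed
  have "card (MT S \<phi>) = (\<Sum>c\<in>\<phi> ` MT S \<phi>. card {x. x \<in> MT S \<phi> \<and> \<phi> x = c})"
    using sum.image_gen[OF finM, of "\<lambda>_. (1::nat)" \<phi>] by simp
  also have "\<dots> = (\<Sum>c\<in>\<phi> ` MT S \<phi>. 2)" using fib by (intro sum.cong) auto
  also have "\<dots> = 2 * card (\<phi> ` MT S \<phi>)" by simp
  finally show ?thesis using c1 c2 by simp
qed

lemma terminal_card: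
  assumes "pcol E S W \<phi>" "pcol E S W' \<psi>" "terminal S \<phi> \<psi>"
  shows "card (\<phi> ` S) \<le> card (\<psi> ` S)"
proof -
  have "MT S \<psi> \<subseteq> MT S \<phi>"
  proof
    fix x assume "x \<in> MT S \<psi>"
    then obtain y where y: "x \<in> S" "y \<in> S" "y \<noteq> x" "\<psi> y = \<psi> x" unfolding MT_def by auto
    show "x \<in> MT S \<phi>"
    proof (cases "\<phi> x = \<phi> y")
      case True then show ?thesis using y unfolding MT_def by auto
    next
      case False
      then show ?thesis using assms(3) y unfolding terminal_def MT_def by force
    qed
  qed
  then have "card (MT S \<psi>) \<le> card (MT S \<phi>)" using fin by (intro card_mono) (auto simp: MT_def)
  then show ?thesis using card_formula[OF assms(1)] card_formula[OF assms(2)] by simp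
qed

lemma card_minus2:
  assumes "A \<subseteq> B - {a, b}" "a \<in> B" "b \<in> B" "a \<noteq> b" "finite B"
  shows "card A + 2 \<le> card B"
proof -
  have "card A \<le> card (B - {a, b})" using assms by (intro card_mono) auto
  moreover have "card (B - {a, b}) = card B - 2" using assms by (simp add: card_Diff_subset)
  moreover have "card B \<ge> 2" using assms
    by (metis card_2_iff card_mono empty_subsetI finite_subset insert_subset)
  ultimately show ?thesis by simp
qed

lemma process:
  assumes pcpsi: "pcol E S UNIV \<psi>"
  shows "pcol E S W \<phi> \<Longrightarrow> \<exists>\<phi>1 k. R E S W k \<phi> \<phi>1 \<and> 2 * k + card (DD S \<phi>1 \<psi>) \<le> card (DD S \<phi> \<psi>)
     \<and> terminal S \<phi>1 \<psi> \<and> \<phi>1 ` S \<subseteq> \<phi> ` S \<and> pcol E S W \<phi>1"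
proof (induction "card (DD S \<phi> \<psi>)" arbitrary: \<phi> rule: less_induct)
  case less
  show ?case
  proof (cases "terminal S \<phi> \<psi>")
    case True
    then show ?thesis using less.prems R_refl[of E S W 0 \<phi>] by (intro exI[of _ \<phi>] exI[of _ 0]) auto
  next
    case False
    then obtain u t where ut: "u \<in> S" "t \<in> S" "u \<noteq> t" "\<psi> u = \<psi> t" "\<phi> u \<noteq> \<phi> t"
      "\<forall>u'\<in>S. u' \<noteq> u \<longrightarrow> \<phi> u' \<noteq> \<phi> u" unfolding terminal_def by blast
    define \<phi>' where "\<phi>' = \<phi>(t := \<phi> u)"
    have uW: "\<phi> u \<in> W" using less.prems ut unfolding pcol_def by auto
    have nb: "\<forall>w\<in>S. E t w \<longrightarrow> \<phi> w \<noteq> \<phi> u"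
    proof (intro ballI impI notI)
      fix w assume w: "w \<in> S" "E t w" "\<phi> w = \<phi> u"
      then have "w = u" using ut by blast
      then show False using w ut pcpsi unfolding pcol_def by metis
    qed
    have mv: "mv E S W \<phi> \<phi>'" unfolding mv_def \<phi>'_def
      apply (rule bexI[of _ t], rule bexI[of _ "\<phi> u"])
      using ut uW nb by auto
    have pc': "pcol E S W \<phi>'" using mv_pcol[OF mv less.prems symE] .
    have sub: "DD S \<phi>' \<psi> \<subseteq> DD S \<phi> \<psi> - {(t,u), (u,t)}"
    proof
      fix p assume p: "p \<in> DD S \<phi>' \<psi>"
      then obtain x y where xy: "p = (x,y)" "x \<in> S" "y \<in> S" "x \<noteq> y" "(\<phi>' x = \<phi>' y) \<noteq> (\<psi> x = \<psi> y)"
        unfolding DD_def by auto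
      have nx: "x \<noteq> t"
      proof
        assume xt: "x = t"
        show False
        proof (cases "y = u")
          case True then show ?thesis using xy xt ut unfolding \<phi>'_def by auto
        next
          case False
          then have "\<phi>' x \<noteq> \<phi>' y" using xy xt ut unfolding \<phi>'_def by auto
          then have "\<psi> t = \<psi> y" using xy xt by auto
          then show ?thesis using no3col[OF pcpsi, of t u y] ut xy xt False by auto
        qed
      qed
      have ny: "y \<noteq> t"
      proof
        assume yt: "y = t"
        show False
        proof (cases "x = u")
          case True then show ?thesis using xy yt ut unfolding \<phi>'_def by auto
        next
          case False
          then have "\<phi>' x \<noteq> \<phi>' y" using xy yt ut unfolding \<phi>'_def by auto
          then have "\<psi> t = \<psi> x" using xy yt by auto
          then show ?thesis using no3col[OF pcpsi, of t u x] ut xy yt False by auto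
        qed
      qed
      show "p \<in> DD S \<phi> \<psi> - {(t,u), (u,t)}" using xy nx ny unfolding DD_def \<phi>'_def by auto
    qed
    have in1: "(t,u) \<in> DD S \<phi> \<psi>" "(u,t) \<in> DD S \<phi> \<psi>" using ut unfolding DD_def by auto
    have c2: "card (DD S \<phi>' \<psi>) + 2 \<le> card (DD S \<phi> \<psi>)"
      using card_minus2[OF sub in1] ut finD by auto
    obtain \<phi>1 k where IH: "R E S W k \<phi>' \<phi>1" "2 * k + card (DD S \<phi>1 \<psi>) \<le> card (DD S \<phi>' \<psi>)"
      "terminal S \<phi>1 \<psi>" "\<phi>1 ` S \<subseteq> \<phi>' ` S" "pcol E S W \<phi>1"
      using less.hyps[of \<phi>'] c2 pc' by auto
    have "\<phi>' ` S \<subseteq> \<phi> ` S" unfolding \<phi>'_def using ut by auto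
    moreover have "R E S W (Suc k) \<phi> \<phi>1" using R.R_step[OF mv IH(1)] .
    ultimately show ?thesis using IH c2 by (intro exI[of _ \<phi>1] exI[of _ "Suc k"]) auto
  qed
qed

lemma tk_comp: "Comp E S"
  unfolding Comp_def
proof (intro allI impI)
  fix \<phi> W assume pc: "pcol E S W \<phi>"
  have pcU: "pcol E S UNIV \<phi>" using pc pcol_subset by blast
  obtain \<gamma> where \<gamma>: "pcol E S UNIV \<gamma>" "\<forall>\<psi>. pcol E S UNIV \<psi> \<longrightarrow> card (\<gamma> ` S) \<le> card (\<psi> ` S)"
    using ex_has_least_nat[of "pcol E S UNIV" \<phi> "\<lambda>\<psi>. card (\<psi> ` S)"] pcU by blast
  obtain \<phi>1 k where p: "R E S W k \<phi> \<phi>1" "2 * k + card (DD S \<phi>1 \<gamma>) \<le> card (DD S \<phi> \<gamma>)"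
    "terminal S \<phi>1 \<gamma>" "\<phi>1 ` S \<subseteq> \<phi> ` S" "pcol E S W \<phi>1"
    using process[OF \<gamma>(1) pc] by blast
  have "k \<le> card S" using p(2) card_DD[OF pc \<gamma>(1)] by simp
  then have rr: "R E S W (card S) \<phi> \<phi>1" using R_mono[OF p(1)] by simp
  have pc1: "pcol E S UNIV \<phi>1" using p(5) pcol_subset by blast
  have "opt E S \<phi>1" unfolding opt_def
    using pc1 terminal_card[OF p(5) \<gamma>(1) p(3)] \<gamma>(2) le_trans by blast
  then show "\<exists>\<phi>'. R E S W (card S) \<phi> \<phi>' \<and> opt E S \<phi>'" using rr by blast
qed

lemma tk_align_aux:
  assumes pcpsi: "pcol E S UNIV \<psi>"
    and freeH: "\<And>\<phi>1. pcol E S W \<phi>1 \<Longrightarrow> card (\<phi>1 ` S) \<le> card (\<psi> ` S) \<Longrightarrow> \<exists>f\<in>W. f \<notin> \<phi>1 ` S"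
  shows "pcol E S W \<phi> \<Longrightarrow> \<exists>\<phi>''. R E S W (card (DD S \<phi> \<psi>)) \<phi> \<phi>'' \<and> samepart S \<phi>'' \<psi>"
proof (induction "card (DD S \<phi> \<psi>)" arbitrary: \<phi> rule: less_induct)
  case less
  obtain \<phi>1 k where p: "R E S W k \<phi> \<phi>1" "2 * k + card (DD S \<phi>1 \<psi>) \<le> card (DD S \<phi> \<psi>)"
    "terminal S \<phi>1 \<psi>" "\<phi>1 ` S \<subseteq> \<phi> ` S" "pcol E S W \<phi>1"
    using process[OF pcpsi less.prems] by blast
  show ?case
  proof (cases "DD S \<phi>1 \<psi> = {}")
    case True
    then have "samepart S \<phi>1 \<psi>" unfolding samepart_def DD_def by auto
    moreover have "R E S W (card (DD S \<phi> \<psi>)) \<phi> \<phi>1" using R_mono[OF p(1)] p(2) by simp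
    ultimately show ?thesis by blast
  next
    case False
    then obtain a b where ab: "a \<in> S" "b \<in> S" "a \<noteq> b" "(\<phi>1 a = \<phi>1 b) \<noteq> (\<psi> a = \<psi> b)"
      unfolding DD_def by auto
    have "\<exists>x y. x \<in> S \<and> y \<in> S \<and> x \<noteq> y \<and> \<phi>1 x = \<phi>1 y \<and> \<psi> x \<noteq> \<psi> y"
    proof (cases "\<phi>1 a = \<phi>1 b")
      case True then show ?thesis using ab by blast
    next
      case False
      then have "\<psi> a = \<psi> b" using ab by auto
      then obtain a' where a': "a' \<in> S" "a' \<noteq> a" "\<phi>1 a' = \<phi>1 a" using p(3) ab False unfolding terminal_def by blast
      have "a' \<noteq> b" using a' False by auto
      then have "\<psi> a' \<noteq> \<psi> a" using no3col[OF pcpsi, of a b a'] a' ab \<open>\<psi> a = \<psi> b\<close> by auto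
      then show ?thesis using a' ab by (intro exI[of _ a] exI[of _ a']) auto
    qed
    then obtain x y where xy: "x \<in> S" "y \<in> S" "x \<noteq> y" "\<phi>1 x = \<phi>1 y" "\<psi> x \<noteq> \<psi> y" by blast
    have "card (\<phi>1 ` S) \<le> card (\<psi> ` S)" using terminal_card[OF p(5) pcpsi p(3)] .
    then obtain f where f: "f \<in> W" "f \<notin> \<phi>1 ` S" using freeH[OF p(5)] by blast
    define \<phi>2 where "\<phi>2 = \<phi>1(x := f)"
    have mv: "mv E S W \<phi>1 \<phi>2" unfolding mv_def \<phi>2_def
      apply (rule bexI[of _ x], rule bexI[of _ f])
      using xy f by (auto simp: image_iff)
    have pc2: "pcol E S W \<phi>2" using mv_pcol[OF mv p(5) symE] .
    have sub: "DD S \<phi>2 \<psi> \<subseteq> DD S \<phi>1 \<psi> - {(x,y), (y,x)}"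
    proof
      fix q assume q: "q \<in> DD S \<phi>2 \<psi>"
      then obtain a b where ab: "q = (a,b)" "a \<in> S" "b \<in> S" "a \<noteq> b" "(\<phi>2 a = \<phi>2 b) \<noteq> (\<psi> a = \<psi> b)"
        unfolding DD_def by auto
      show "q \<in> DD S \<phi>1 \<psi> - {(x,y), (y,x)}"
      proof (cases "a = x")
        case True
        then have "\<phi>2 a \<noteq> \<phi>2 b" using ab f unfolding \<phi>2_def by (auto simp: image_iff)
        then have ps: "\<psi> a = \<psi> b" using ab by auto
        then have "b \<noteq> y" using xy True by auto
        then have "\<phi>1 a \<noteq> \<phi>1 b" using no3col[OF p(5), of x y b] xy ab True by auto
        then show ?thesis using ab ps True \<open>b \<noteq> y\<close> unfolding DD_def by auto
      next
        case False
        show ?thesis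
        proof (cases "b = x")
          case True
          then have "\<phi>2 a \<noteq> \<phi>2 b" using ab f unfolding \<phi>2_def by (auto simp: image_iff)
          then have ps: "\<psi> a = \<psi> b" using ab by auto
          then have "a \<noteq> y" using xy True by auto
          then have "\<phi>1 a \<noteq> \<phi>1 b" using no3col[OF p(5), of x y a] xy ab True by auto
          then show ?thesis using ab ps True \<open>a \<noteq> y\<close> unfolding DD_def by auto
        next
          case False2: False
          then show ?thesis using ab False unfolding DD_def \<phi>2_def by auto
        qed
      qed
    qed
    have in1: "(x,y) \<in> DD S \<phi>1 \<psi>" "(y,x) \<in> DD S \<phi>1 \<psi>" using xy unfolding DD_def by auto
    have c2: "card (DD S \<phi>2 \<psi>) + 2 \<le> card (DD S \<phi>1 \<psi>)"
      using card_minus2[OF sub in1] xy finD by auto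
    obtain \<phi>'' where IH: "R E S W (card (DD S \<phi>2 \<psi>)) \<phi>2 \<phi>''" "samepart S \<phi>'' \<psi>"
      using less.hyps[of \<phi>2] c2 p(2) pc2 by auto
    have "R E S W (k + (1 + card (DD S \<phi>2 \<psi>))) \<phi> \<phi>''"
      using R_trans[OF p(1) R_trans[OF R_one[OF mv] IH(1)]] .
    then have "R E S W (card (DD S \<phi> \<psi>)) \<phi> \<phi>''" using R_mono c2 p(2) by fastforce
    then show ?thesis using IH(2) by blast
  qed
qed

lemma tk_align: "Align E S"
  unfolding Align_def
proof (intro allI impI)
  fix \<phi> \<psi> W assume o1: "opt E S \<phi>" and o2: "opt E S \<psi>" and sub: "\<phi> ` S \<subseteq> W"
    and fr: "\<exists>r\<in>W. r \<notin> \<phi> ` S"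
  obtain r where r: "r \<in> W" "r \<notin> \<phi> ` S" using fr by blast
  have pcpsi: "pcol E S UNIV \<psi>" using o2 unfolding opt_def by auto
  have ceq: "card (\<psi> ` S) = card (\<phi> ` S)" using opt_card_eq[OF o2 o1] .
  have freeH: "\<exists>f\<in>W. f \<notin> \<phi>1 ` S" if "pcol E S W \<phi>1" "card (\<phi>1 ` S) \<le> card (\<psi> ` S)" for \<phi>1
    using free_colour[OF fin _ sub r] that ceq by simp
  have pc: "pcol E S W \<phi>" using opt_pcol[OF o1 sub] .
  obtain \<phi>'' where p: "R E S W (card (DD S \<phi> \<psi>)) \<phi> \<phi>''" "samepart S \<phi>'' \<psi>"
    using tk_align_aux[OF pcpsi freeH pc] by blast
  have "R E S W (2 * card S) \<phi> \<phi>''" using R_mono[OF p(1)] card_DD[OF pc pcpsi] by simp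
  then show "\<exists>\<phi>'. R E S W (2 * card S) \<phi> \<phi>' \<and> samepart S \<phi>' \<psi>" using p(2) by blast
qed

end



lemma sg_facts:
  assumes "simple_graph V E"
  shows "finite V" "\<And>u v. E u v \<Longrightarrow> u \<in> V" "\<And>u v. E u v \<Longrightarrow> v \<in> V" "\<forall>u v. E u v \<longrightarrow> E v u" "\<And>v. \<not> E v v"
  using assms unfolding simple_graph_def by blast+

lemma mk_P3P1:
  assumes sg: "simple_graph V E"
    and V: "p0 \<in> V" "p1 \<in> V" "p2 \<in> V" "p3 \<in> V"
    and d: "p0 \<noteq> p1" "p0 \<noteq> p2" "p0 \<noteq> p3" "p1 \<noteq> p2" "p1 \<noteq> p3" "p2 \<noteq> p3"
    and e: "E p0 p1" "E p1 p2" "\<not> E p0 p2" "\<not> E p0 p3" "\<not> E p1 p3" "\<not> E p2 p3"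
  shows "has_induced_P3P1 V E"
proof -
  have symE: "\<forall>u v. E u v \<longrightarrow> E v u" and irr: "\<And>v. \<not> E v v" using sg_facts[OF sg] by auto
  define f where "f = (\<lambda>i::nat. if i = 0 then p0 else if i = 1 then p1 else if i = 2 then p2 else p3)"
  have r: "{0..3::nat} = {0,1,2,3}" by auto
  have "inj_on f {0..3}" unfolding r f_def inj_on_def using d by auto
  moreover have "f ` {0..3} \<subseteq> V" unfolding r f_def using V by auto
  moreover have "\<forall>i\<in>{0..3}. \<forall>j\<in>{0..3}. E (f i) (f j) \<longleftrightarrow> P3P1_edge i j"
  proof -
    have edge: "\<And>i j::nat. P3P1_edge i j \<longleftrightarrow> (i=0\<and>j=1) \<or> (i=1\<and>j=0) \<or> (i=1\<and>j=2) \<or> (i=2\<and>j=1)"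
      unfolding P3P1_edge_def doubleton_eq_iff by auto
    have e2: "E p1 p0" "E p2 p1" "\<not> E p2 p0" "\<not> E p3 p0" "\<not> E p3 p1" "\<not> E p3 p2"
      using e symE by blast+
    show ?thesis unfolding r by (simp add: edge f_def e e2 irr)
  qed
  ultimately show ?thesis unfolding has_induced_P3P1_def by blast
qed

definition indepset :: "('a \<Rightarrow> 'a \<Rightarrow> bool) \<Rightarrow> 'a set \<Rightarrow> bool" where
  "indepset E I \<longleftrightarrow> (\<forall>x\<in>I. \<forall>y\<in>I. \<not> E x y)"

lemma P3P1_structure:
  assumes sg: "simple_graph V E" and pf: "P3P1_free V E" and SV: "S \<subseteq> V" and i3: "indep3 E S"
  shows "\<exists>X Q. S = X \<union> Q \<and> X \<inter> Q = {} \<and> Q \<noteq> {} \<and> (\<forall>x\<in>X. \<forall>q\<in>Q. E x q) \<and> P3free E Q"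
proof -
  have finV: "finite V" and symE: "\<forall>u v. E u v \<longrightarrow> E v u" and irr: "\<And>v. \<not> E v v"
    using sg_facts[OF sg] by auto
  have finS: "finite S" using finV SV finite_subset by blast
  have noP: "\<not> has_induced_P3P1 V E" using pf unfolding P3P1_free_def by auto
  have P: "False" if "p0 \<in> S" "p1 \<in> S" "p2 \<in> S" "p3 \<in> S"
    "p0 \<noteq> p1" "p0 \<noteq> p2" "p0 \<noteq> p3" "p1 \<noteq> p2" "p1 \<noteq> p3" "p2 \<noteq> p3"
    "E p0 p1" "E p1 p2" "\<not> E p0 p2" "\<not> E p0 p3" "\<not> E p1 p3" "\<not> E p2 p3" for p0 p1 p2 p3
    using mk_P3P1[OF sg, of p0 p1 p2 p3] that SV noP by auto
  obtain a1 a2 a3 where a: "a1 \<in> S" "a2 \<in> S" "a3 \<in> S" "a1 \<noteq> a2" "a1 \<noteq> a3" "a2 \<noteq> a3"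
    "\<not> E a1 a2" "\<not> E a1 a3" "\<not> E a2 a3" using i3 unfolding indep3_def by blast
  define T where "T = {a1, a2, a3}"
  have PT: "T \<subseteq> T \<and> T \<subseteq> S \<and> indepset E T" unfolding T_def indepset_def using a symE irr by auto
  have bnd: "\<forall>I. T \<subseteq> I \<and> I \<subseteq> S \<and> indepset E I \<longrightarrow> card I < Suc (card S)"
    using finS by (simp add: card_mono less_Suc_eq_le)
  obtain I where I: "T \<subseteq> I" "I \<subseteq> S" "indepset E I"
    and Imax: "\<forall>J. T \<subseteq> J \<and> J \<subseteq> S \<and> indepset E J \<longrightarrow> card J \<le> card I"
    using ex_has_greatest_nat[of "\<lambda>I. T \<subseteq> I \<and> I \<subseteq> S \<and> indepset E I" T card "Suc (card S)", OF PT bnd]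
    by blast
  have finI: "finite I" using I finS finite_subset by blast
  have aI: "a1 \<in> I" "a2 \<in> I" "a3 \<in> I" using I T_def by auto
  have ind: "\<not> E x y" if "x \<in> I" "y \<in> I" for x y using I(3) that unfolding indepset_def by auto
  have maxI: "\<exists>a\<in>I. E z a" if z: "z \<in> S" "z \<notin> I" for z
  proof (rule ccontr)
    assume "\<not> ?thesis"
    then have nz: "\<forall>a\<in>I. \<not> E z a \<and> \<not> E a z" using symE by blast
    have "indepset E (insert z I)" unfolding indepset_def
    proof (intro ballI)
      fix x y assume "x \<in> insert z I" "y \<in> insert z I"
      then show "\<not> E x y" using nz ind irr by auto
    qed
    moreover have "T \<subseteq> insert z I" "insert z I \<subseteq> S" using I z by auto
    ultimately have "card (insert z I) \<le> card I" using Imax by blast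
    then show False using finI z by simp
  qed
  have K: "E z c" if "z \<in> S" "z \<notin> I" "a \<in> I" "b \<in> I" "a \<noteq> b" "E z a" "E z b" "c \<in> I" for z a b c
  proof (rule ccontr)
    assume nc: "\<not> E z c"
    have "c \<noteq> a" "c \<noteq> b" using nc that by auto
    moreover have "a \<noteq> z" "b \<noteq> z" "c \<noteq> z" using that by auto
    moreover have "E a z" using that symE by auto
    moreover have "\<not> E c z" using nc symE by auto
    moreover have "a \<in> S" "b \<in> S" "c \<in> S" using that I(2) by auto
    moreover have "\<not> E a b" "\<not> E a c" "\<not> E b c" using ind that by auto
    ultimately show False by (intro P[of a z b c]) (use that nc in auto)
  qed
  have third: "\<exists>c\<in>I. c \<noteq> a \<and> c \<noteq> b" for a b
  proof (cases "a1 \<noteq> a \<and> a1 \<noteq> b")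
    case True then show ?thesis using aI by blast
  next
    case False
    show ?thesis
    proof (cases "a2 \<noteq> a \<and> a2 \<noteq> b")
      case True then show ?thesis using aI by blast
    next
      case False2: False
      then have "a3 \<noteq> a \<and> a3 \<noteq> b" using False a by auto
      then show ?thesis using aI by blast
    qed
  qed
  define X where "X = {x\<in>S - I. \<forall>a\<in>I. E x a}"
  define Q where "Q = S - X"
  have IQ: "I \<subseteq> Q" unfolding Q_def X_def using I by auto
  have uniq: "a = b" if "u \<in> Q" "u \<notin> I" "a \<in> I" "b \<in> I" "E u a" "E u b" for u a b
  proof (rule ccontr)
    assume "a \<noteq> b"
    then have "\<forall>c\<in>I. E u c" using K[of u a b] that unfolding Q_def by auto
    then show False using that unfolding Q_def X_def by auto
  qed
  have exr: "\<exists>a\<in>I. E u a" if "u \<in> Q" "u \<notin> I" for u using maxI that unfolding Q_def by auto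
  define rep where "rep u a \<longleftrightarrow> a \<in> I \<and> (u = a \<or> (u \<notin> I \<and> E u a))" for u a
  have rep_ex: "\<exists>a. rep u a" if "u \<in> Q" for u
    using exr[OF that] unfolding rep_def by (cases "u \<in> I") auto
  have rep_un: "a = b" if "u \<in> Q" "rep u a" "rep u b" for u a b
  proof (cases "u \<in> I")
    case True then show ?thesis using that ind unfolding rep_def by auto
  next
    case False then show ?thesis using that uniq unfolding rep_def by auto
  qed
  have same: "E u v" if uv: "u \<in> Q" "v \<in> Q" "u \<noteq> v" "rep u a" "rep v a" for u v a
  proof (cases "u \<in> I")
    case True
    then have "a = u" using uv(4) ind unfolding rep_def by auto
    then have "v \<notin> I \<and> E v a" using uv unfolding rep_def by auto
    then show ?thesis using \<open>a = u\<close> symE by auto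
  next
    case uI: False
    show ?thesis
    proof (cases "v \<in> I")
      case True
      then have "a = v" using uv(5) ind unfolding rep_def by auto
      then show ?thesis using uv uI unfolding rep_def by auto
    next
      case vI: False
      have ea: "E u a" "E v a" "a \<in> I" using uv uI vI unfolding rep_def by auto
      obtain b where b: "b \<in> I" "b \<noteq> a" using third by blast
      have nub: "\<not> E u b" using uniq[of u a b] uv(1) uI ea b by auto
      have nvb: "\<not> E v b" using uniq[of v a b] uv(2) vI ea b by auto
      show ?thesis
      proof (rule ccontr)
        assume nuv: "\<not> E u v"
        have "u \<in> S" "v \<in> S" "a \<in> S" "b \<in> S" using uv ea b I(2) unfolding Q_def by auto
        moreover have "u \<noteq> a" "v \<noteq> a" "u \<noteq> b" "v \<noteq> b" using uI vI ea b by auto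
        moreover have "E a v" using ea symE by auto
        moreover have "\<not> E a b" using ind ea b by auto
        ultimately show False by (intro P[of u a v b]) (use ea b nuv nub nvb uv(3) in auto)
      qed
    qed
  qed
  have diff: "a = b" if uv: "u \<in> Q" "v \<in> Q" "E u v" "rep u a" "rep v b" for u v a b
  proof (rule ccontr)
    assume ab: "a \<noteq> b"
    show False
    proof (cases "u \<in> I")
      case True
      then have "a = u" using uv(4) ind unfolding rep_def by auto
      have "v \<notin> I" using True uv(3) ind by auto
      then have "rep v u" using True uv(3) symE unfolding rep_def by auto
      then show False using rep_un[OF uv(2) _ uv(5)] \<open>a = u\<close> ab by auto
    next
      case uI: False
      show False
      proof (cases "v \<in> I")
        case True
        have "rep u v" using True uv(3) uI unfolding rep_def by auto
        moreover have "b = v" using True uv(5) ind unfolding rep_def by auto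
        ultimately show False using rep_un[OF uv(1) _ uv(4)] ab by auto
      next
        case vI: False
        have ea: "E u a" "E v b" "a \<in> I" "b \<in> I" using uv uI vI unfolding rep_def by auto
        obtain c where c: "c \<in> I" "c \<noteq> a" "c \<noteq> b" using third by blast
        have nav: "\<not> E v a" using uniq[of v a b] uv(2) vI ea ab by auto
        have nuc: "\<not> E u c" using uniq[of u a c] uv(1) uI ea c by auto
        have nvc: "\<not> E v c" using uniq[of v b c] uv(2) vI ea c by auto
        have "u \<in> S" "v \<in> S" "a \<in> S" "c \<in> S" using uv ea c I(2) unfolding Q_def by auto
        moreover have "a \<noteq> u" "a \<noteq> v" "c \<noteq> u" "c \<noteq> v" "u \<noteq> v" using uI vI ea c uv(3) irr by auto
        moreover have "E a u" "\<not> E a v" "\<not> E a c" "\<not> E c u" "\<not> E c v"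
          using ea symE nav ind c nuc nvc by auto
        ultimately show False by (intro P[of a u v c]) (use uv(3) c nuc nvc in auto)
      qed
    qed
  qed
  have p3: "P3free E Q" unfolding P3free_def
  proof (intro ballI impI)
    fix u v w assume uvw: "u \<in> Q" "v \<in> Q" "w \<in> Q" "E u v" "E v w" "u \<noteq> w"
    obtain a where ra: "rep u a" using rep_ex uvw by blast
    obtain b where rb: "rep v b" using rep_ex uvw by blast
    obtain c where rc: "rep w c" using rep_ex uvw by blast
    have "a = b" using diff[OF _ _ _ ra rb] uvw by auto
    moreover have "b = c" using diff[OF _ _ _ rb rc] uvw by auto
    ultimately show "E u w" using same[of u w a] uvw ra rc by auto
  qed
  have cross: "\<forall>x\<in>X. \<forall>q\<in>Q. E x q"
  proof (intro ballI)
    fix x q assume x: "x \<in> X" and q: "q \<in> Q"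
    show "E x q"
    proof (cases "q \<in> I")
      case True then show ?thesis using x unfolding X_def by auto
    next
      case qI: False
      obtain a where qa: "a \<in> I" "E q a" using exr[OF q qI] by blast
      obtain b where b: "b \<in> I" "b \<noteq> a" using third by blast
      obtain c where c: "c \<in> I" "c \<noteq> a" "c \<noteq> b" using third by blast
      have nqb: "\<not> E q b" using uniq[of q a b] q qI qa b by auto
      have nqc: "\<not> E q c" using uniq[of q a c] q qI qa c by auto
      show ?thesis
      proof (rule ccontr)
        assume nxq: "\<not> E x q"
        have xS: "x \<in> S" "x \<notin> I" using x unfolding X_def by auto
        have "E x b" "E x c" using x b c unfolding X_def by auto
        moreover have "q \<in> S" "b \<in> S" "c \<in> S" using q b c I(2) unfolding Q_def by auto
        moreover have "b \<noteq> x" "c \<noteq> x" "q \<noteq> b" "q \<noteq> c" "q \<noteq> x" using xS b c qI x q unfolding Q_def by auto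
        moreover have "\<not> E b c" "\<not> E b q" "\<not> E c q" using ind b c nqb nqc symE by auto
        moreover have "E b x" using \<open>E x b\<close> symE by auto
        ultimately show False by (intro P[of b x c q]) (use nxq c xS in auto)
      qed
    qed
  qed
  have "S = X \<union> Q" "X \<inter> Q = {}" unfolding Q_def X_def by auto
  moreover have "Q \<noteq> {}" using IQ aI by auto
  ultimately show ?thesis using p3 cross by blast
qed

lemma main_ind:
  assumes sg: "simple_graph V E" and pf: "P3P1_free V E"
  shows "S \<subseteq> V \<Longrightarrow> Comp E S \<and> Align E S"
proof (induction "card S" arbitrary: S rule: less_induct)
  case less
  have finV: "finite V" and symE: "\<forall>u v. E u v \<longrightarrow> E v u" using sg_facts[OF sg] by auto
  have finS: "finite S" using finV less.prems finite_subset by blast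
  show ?case
  proof (cases "indep3 E S")
    case False
    interpret tk1 E S using finS False symE by unfold_locales auto
    show ?thesis using tk_comp tk_align by blast
  next
    case True
    obtain X Q where XQ: "S = X \<union> Q" "X \<inter> Q = {}" "Q \<noteq> {}" "\<forall>x\<in>X. \<forall>q\<in>Q. E x q" "P3free E Q"
      using P3P1_structure[OF sg pf less.prems True] by blast
    have "X \<subset> S" using XQ by auto
    then have lt: "card X < card S" using finS psubset_card_mono by blast
    have IH: "Comp E X \<and> Align E X" using less.hyps[OF lt] less.prems XQ by auto
    have finQ: "finite Q" using finS XQ by auto
    interpret joinctx E S X Q using finS XQ symE by unfold_locales auto
    show ?thesis using comp_join[OF _ cluster_comp[OF finQ XQ(5) symE]]
        align_join[OF _ cluster_align[OF finQ XQ(5) symE]] IH by blast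
  qed
qed

definition nrm :: "'a set \<Rightarrow> ('a \<Rightarrow> nat) \<Rightarrow> ('a \<Rightarrow> nat)" where
  "nrm V g = (\<lambda>x. if x \<in> V then g x else undefined)"

lemma pcol_colouring:
  assumes "simple_graph V E" "pcol E V {1..l} \<phi>"
  shows "colouring V E l (nrm V \<phi>)"
  using assms unfolding colouring_def pcol_def nrm_def simple_graph_def by auto

lemma R_walk:
  assumes sg: "simple_graph V E"
  shows "R E V {1..l} k \<phi> \<psi> \<Longrightarrow> pcol E V {1..l} \<phi> \<Longrightarrow> \<exists>m\<le>k. recol_walk V E l m (nrm V \<phi>) (nrm V \<psi>)"
proof (induction rule: R.induct)
  case (R_base \<phi> \<psi> k)
  have "nrm V \<phi> = nrm V \<psi>" using R_base unfolding eqon_def nrm_def by auto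
  then have "recol_walk V E l 0 (nrm V \<phi>) (nrm V \<psi>)"
    unfolding recol_walk_def using pcol_colouring[OF sg R_base(2)]
    by (intro exI[of _ "\<lambda>_. nrm V \<phi>"]) auto
  then show ?case by blast
next
  case (R_step \<phi> \<chi> k \<psi>)
  have symE: "\<forall>u v. E u v \<longrightarrow> E v u" using sg_facts[OF sg] by auto
  have pc: "pcol E V {1..l} \<chi>" using mv_pcol[OF R_step(1) R_step(4) symE] .
  obtain m p where mp: "m \<le> k" "p 0 = nrm V \<chi>" "p m = nrm V \<psi>" "\<forall>i\<in>{0..m}. colouring V E l (p i)"
    "\<forall>i<m. recol_adj V E l (p i) (p (Suc i))"
    using R_step(3)[OF pc] unfolding recol_walk_def by blast
  obtain v c where v: "v \<in> V" "c \<noteq> \<phi> v" "\<forall>x\<in>V. \<chi> x = (if x = v then c else \<phi> x)"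
    using R_step(1) unfolding mv_def by blast
  define p' where "p' = (\<lambda>i. if i = 0 then nrm V \<phi> else p (i - 1))"
  have c0: "colouring V E l (nrm V \<phi>)" using pcol_colouring[OF sg R_step(4)] .
  have "{x\<in>V. nrm V \<phi> x \<noteq> nrm V \<chi> x} = {v}" using v unfolding nrm_def by auto
  then have adj0: "recol_adj V E l (nrm V \<phi>) (nrm V \<chi>)"
    unfolding recol_adj_def using c0 pcol_colouring[OF sg pc] by simp
  have "recol_walk V E l (Suc m) (nrm V \<phi>) (nrm V \<psi>)"
    unfolding recol_walk_def
  proof (intro exI[of _ p'] conjI ballI allI impI)
    show "p' 0 = nrm V \<phi>" unfolding p'_def by simp
    show "p' (Suc m) = nrm V \<psi>" unfolding p'_def using mp by simp
    fix i assume "i \<in> {0..Suc m}"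
    then show "colouring V E l (p' i)" unfolding p'_def using c0 mp(4) by auto
  next
    fix i assume i: "i < Suc m"
    show "recol_adj V E l (p' i) (p' (Suc i))"
    proof (cases i)
      case 0 then show ?thesis unfolding p'_def using adj0 mp(2) by simp
    next
      case (Suc j) then show ?thesis unfolding p'_def using mp(5) i by simp
    qed
  qed
  then show ?case using mp(1) by (intro exI[of _ "Suc m"]) auto
qed

theorem theorem6:
  fixes V :: "'a set" and E :: "'a \<Rightarrow> 'a \<Rightarrow> bool" and n l :: nat
  assumes "simple_graph V E"
    and "P3P1_free V E"
    and "card V = n"
    and "l \<ge> chromatic_number V E + 1"
  shows "\<forall>\<alpha> \<beta>. colouring V E l \<alpha> \<and> colouring V E l \<beta> \<longrightarrow> recol_dist_le V E l \<alpha> \<beta> (6 * n)"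
proof (intro allI impI)
  fix \<alpha> \<beta> assume ab: "colouring V E l \<alpha> \<and> colouring V E l \<beta>"
  have sg: "simple_graph V E" by fact
  have finV: "finite V" and symE: "\<forall>u v. E u v \<longrightarrow> E v u" and irr: "\<And>v. \<not> E v v"
    using sg_facts[OF sg] by auto
  define P where "P = {1..l}"
  have cpc: "pcol E V P \<gamma>" if "colouring V E l \<gamma>" for \<gamma>
    using that unfolding colouring_def pcol_def P_def by auto
  have nrm_id: "nrm V \<gamma> = \<gamma>" if "colouring V E l \<gamma>" for \<gamma>
    using that unfolding colouring_def nrm_def by auto
  have pa: "pcol E V P \<alpha>" and pb: "pcol E V P \<beta>" using ab cpc by auto
  have CA: "Comp E V" "Align E V" using main_ind[OF sg assms(2)] by auto
  obtain f :: "'a \<Rightarrow> nat" and nn :: nat where fnn: "f ` V = {i. i < nn} \<and> inj_on f V"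
    using finite_imp_inj_to_nat_seg[OF finV] by metis
  have f: "inj_on f V" using fnn by (rule conjunct2)
  define k0 where "k0 = chromatic_number V E"
  have ex: "\<exists>k \<gamma>. colouring V E k \<gamma>"
  proof -
    define N where "N = nn"
    have N: "f ` V \<subseteq> {..<N}" using fnn unfolding N_def by auto
    define \<gamma> where "\<gamma> = (\<lambda>x. if x \<in> V then f x + 1 else undefined)"
    have "colouring V E N \<gamma>" unfolding colouring_def
    proof (intro conjI ballI allI impI)
      fix v assume "v \<in> V" then show "\<gamma> v \<in> {1..N}" using N unfolding \<gamma>_def by auto
    next
      fix v assume "v \<notin> V" then show "\<gamma> v = undefined" unfolding \<gamma>_def by auto
    next
      fix u v assume e: "E u v"
      then have uv: "u \<in> V" "v \<in> V" "u \<noteq> v" using sg_facts[OF sg] by auto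
      then have "f u \<noteq> f v" using f unfolding inj_on_def by auto
      then show "\<gamma> u \<noteq> \<gamma> v" using uv unfolding \<gamma>_def by auto
    qed
    then show ?thesis by blast
  qed
  then have "\<exists>\<gamma>. colouring V E k0 \<gamma>" unfolding k0_def chromatic_number_def
    by (rule LeastI_ex)
  then obtain \<gamma>0 where g0: "colouring V E k0 \<gamma>0" by blast
  have pcg: "pcol E V UNIV \<gamma>0" using g0 unfolding colouring_def pcol_def by auto
  have cg: "card (\<gamma>0 ` V) \<le> k0"
  proof -
    have "\<gamma>0 ` V \<subseteq> {1..k0}" using g0 unfolding colouring_def by auto
    then have "card (\<gamma>0 ` V) \<le> card {1..k0}" by (intro card_mono) auto
    then show ?thesis by simp
  qed
  have lk: "k0 < l" using assms(4) k0_def by simp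
  have cP: "card P = l" unfolding P_def by simp
  have freeP: "\<exists>r\<in>P. r \<notin> \<gamma> ` V" if "card (\<gamma> ` V) < l" for \<gamma>
  proof (rule ccontr)
    assume "\<not> ?thesis"
    then have "P \<subseteq> \<gamma> ` V" by auto
    then have "card P \<le> card (\<gamma> ` V)" using finV card_mono by blast
    then show False using that cP by simp
  qed
  obtain \<alpha>1 where a1: "R E V P (card V) \<alpha> \<alpha>1" "opt E V \<alpha>1" using CA(1) pa unfolding Comp_def by blast
  obtain \<beta>1 where b1: "R E V P (card V) \<beta> \<beta>1" "opt E V \<beta>1" using CA(1) pb unfolding Comp_def by blast
  have pa1: "pcol E V P \<alpha>1" using R_pcol[OF a1(1) pa symE] .
  have pb1: "pcol E V P \<beta>1" using R_pcol[OF b1(1) pb symE] .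
  have "card (\<alpha>1 ` V) \<le> card (\<gamma>0 ` V)" using a1(2) pcg unfolding opt_def by blast
  then have ca1: "card (\<alpha>1 ` V) < l" using cg lk by linarith
  have sa1: "\<alpha>1 ` V \<subseteq> P" using pa1 unfolding pcol_def by auto
  obtain \<alpha>2 where a2: "R E V P (2 * card V) \<alpha>1 \<alpha>2" "samepart V \<alpha>2 \<beta>1"
    using CA(2) a1(2) b1(2) sa1 freeP[OF ca1] unfolding Align_def by blast
  have pa2: "pcol E V P \<alpha>2" using R_pcol[OF a2(1) pa1 symE] .
  have "card (\<beta>1 ` V) \<le> card (\<gamma>0 ` V)" using b1(2) pcg unfolding opt_def by blast
  then have ca2: "card (\<alpha>2 ` V) < l" using samepart_card[OF a2(2)] cg lk by linarith
  have r3: "R E V P (2 * card V) \<alpha>2 \<beta>1" using rename[OF finV symE pa2 pb1 a2(2) freeP[OF ca2]] .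
  have r4: "R E V P (card V) \<beta>1 \<beta>" using R_sym[OF b1(1) pb symE] .
  have "R E V P (card V + 2 * card V + 2 * card V + card V) \<alpha> \<beta>"
    using R_trans[OF R_trans[OF R_trans[OF a1(1) a2(1)] r3] r4] .
  then have rr: "R E V {1..l} (6 * n) \<alpha> \<beta>" using assms(3) P_def by (simp add: algebra_simps)
  have paP: "pcol E V {1..l} \<alpha>" using pa unfolding P_def .
  obtain m where "m \<le> 6 * n" "recol_walk V E l m (nrm V \<alpha>) (nrm V \<beta>)"
    using R_walk[OF sg rr paP] by blast
  moreover have "nrm V \<alpha> = \<alpha>" "nrm V \<beta> = \<beta>" using nrm_id ab by auto
  ultimately show "recol_dist_le V E l \<alpha> \<beta> (6 * n)"
    unfolding recol_dist_le_def by auto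
qed

end
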